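(* Let $(X,\beta)$ be a finite wGKAT automaton and let $\bar\partial$ be the unique transition map on $\mathrm{Exp}/{\equiv}$ making the quotient map $[-]_\equiv:\mathrm{Exp}\to\mathrm{Exp}/{\equiv}$ a homomorphism from $(\mathrm{Exp},\partial)$ to $(\mathrm{Exp}/{\equiv},\bar\partial)$. A map $h:X\to\mathrm{Exp}$ is a solution up to $\equiv$ of the system associated with $(X,\beta)$ if and only if $[-]_\equiv\circ h$ is a homomorphism of wGKAT automata from $(X,\beta)$ to $(\mathrm{Exp}/{\equiv},\bar\partial)$.
   Context: Fix a finite set $T$ of primitive tests, a set $\mathrm{Act}$ of atomic actions, a set $\mathrm{Out}$ of return values, and a semiring $(S,+,\cdot,0,1)$ that is positive ($x+y=0\Rightarrow x=y=0$), refinement (whenever $x+y=z+w$ there exist $s,t,u,v$ with $s+t=x$, $s+u=z$, $u+v=y$, $t+v=w$) and Conway (with ${}^*:S\to S$ satisfying $(a+b)^*=a^*(ba^* )^*$, $(ab)^*=1+a(ba)^*b$). Tests: $b,c\in\mathrm{BExp}::=\mathtt{0}\mid\mathtt{1}\mid t\ (t\in T)\mid\bar b\mid b+c\mid bc$ ($\mathtt 0,\mathtt 1$ false/true, distinct from semiring $0,1$); $\equiv_{BA}$ is Boolean equivalence; $\mathrm{At}$ is the finite set of atoms of the free Boolean algebra on $T$, atoms also regarded as tests; $\alpha\le b$ means $\alpha$ entails $b$. Expressions: $e,f\in\mathrm{Exp}::= p\in\mathrm{Act}\mid b\in\mathrm{BExp}\mid e+_b f\mid e;f\mid e^{(b)}\mid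 v\in\mathrm{Out}\mid e\oplus_{r,s} f\ (r,s\in S)$; $\odot r:=\mathtt 1\oplus_{r,0}\mathtt 0$. $\mathcal M_\omega(X)$: finitely supported maps $X\to S$, pointwise operations; $\delta_x$ indicator of $x$; $\nu[A]=\sum_{x\in A}\nu(x)$; $\mathrm{supp}(\nu)=\{x:\nu(x)\ne0\}$. A wGKAT automaton is $(X,\beta)$ with $\beta:X\to\mathcal M_\omega(\{\mathsf{acc},\mathsf{rej}\}+\mathrm{Out}+\mathrm{Act}\times X)^{\mathrm{At}}$. A map $h:X\to Y$ between automata $(X,\beta),(Y,\gamma)$ is a homomorphism if for all $x,\alpha$: $\gamma(h(x))_\alpha(o)=\beta(x)_\alpha(o)$ for $o\in\{\mathsf{acc},\mathsf{rej}\}+\mathrm{Out}$, and $\gamma(h(x))_\alpha(p,y)=\beta(x)_\alpha[\{p\}\times h^{-1}(y)]$. The derivative automaton $(\mathrm{Exp},\partial)$: $\partial(b)_\alpha=\delta_{\mathsf{acc}}$ if $\alpha\le b$, else $\delta_{\mathsf{rej}}$; $\partial(v)_\alpha=\delta_v$; $\partial(p)_\alpha=\delta_{(p,\mathtt 1)}$; $\partial(e+_bf)_\alpha=\partial(e)_\alpha$ if $\alpha\le b$, else $\partial(f)_\alpha$; $\partial(e\oplus_{r,s}f)_\alpha=r\partial(e)_\alpha+s\partial(f)_\alpha$; $\partial(e;f)_\alpha=\sum_x\partial(e)_\alpha(x)c_{\alpha,f}(x)$ with $c_{\alpha,f}(\mathsf{acc})=\partial(f)_\alpha$, $c_{\alpha,f}(x)=\delta_x$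 for $x\in\{\mathsf{rej}\}\cup\mathrm{Out}$, $c_{\alpha,f}(p,e')=\delta_{(p,e';f)}$; $\partial(e^{(b)})_\alpha(x)$ is $1$ if $x=\mathsf{acc}$ and $\alpha\le\bar b$; $\partial(e)_\alpha(\mathsf{acc})^*\partial(e)_\alpha(x)$ if $x\in\{\mathsf{rej}\}\cup\mathrm{Out}$ and $\alpha\le b$; $\partial(e)_\alpha(\mathsf{acc})^*\partial(e)_\alpha(p,e')$ if $x=(p,e';e^{(b)})$ and $\alpha\le b$; $0$ otherwise. Generalized guarded sum: $\mathrm{GS}_{\alpha\in\emptyset}e_\alpha:=\mathtt 0$, $\mathrm{GS}_{\alpha\in\Phi}e_\alpha:=e_\gamma+_\gamma\mathrm{GS}_{\alpha\in\Phi\setminus\{\gamma\}}e_\alpha$ ($\gamma\in\Phi$); generalized weighted sum: $\bigoplus_{i\in I}r_i\cdot e_i:=e_j\oplus_{r_j,1}\big(\bigoplus_{i\in I\setminus\{j\}}r_i\cdot e_i\big)$ ($j\in I$), the empty weighted sum being $\odot0$; both well defined up to $\equiv$. The system associated with $(X,\beta)$ assigns to each $x\in X$ the formal term $\tau(x)=\mathrm{GS}_{\alpha\in\mathrm{At}}\big(\bigoplus_{d\in\mathrm{supp}(\beta(x)_\alpha)}\beta(x)_\alpha(d)\cdot\mathrm{sys}(d)\big)$ with $\mathrm{sys}(\mathsf{rej})=\mathtt 0$, $\mathrm{sys}(\mathsf{acc})=\mathtt 1$, $\mathrm{sys}(v)=v$, $\mathrm{sys}(p,x')=p\,x'$ (a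 formal product of the expression $p$ with the indeterminate $x'$). For $h:X\to\mathrm{Exp}$, $h^\#(\tau(x))\in\mathrm{Exp}$ is obtained by replacing each formal product $g\,x'$ by $g;h(x')$ (and keeping expressions, guarded choices and weighted choices as they are). $h$ is a solution up to $\equiv$ if $h(x)\equiv h^\#(\tau(x))$ for all $x\in X$. $E:\mathrm{Exp}\to S^{\mathrm{At}}$: $E(p)_\alpha=E(v)_\alpha=0$; $E(b)_\alpha=1$ if $\alpha\le b$ else $0$; $E(e\oplus_{r,s}f)_\alpha=rE(e)_\alpha+sE(f)_\alpha$; $E(e+_bf)_\alpha=E(e)_\alpha$ if $\alpha\le b$ else $E(f)_\alpha$; $E(e;f)_\alpha=E(e)_\alpha E(f)_\alpha$; $E(e^{(b)})_\alpha=E(\bar b)_\alpha$. The relation $\equiv$ is the smallest congruence on $\mathrm{Exp}$ (tests taken up to $\equiv_{BA}$; sequencing binds tighter than $\oplus$, $\odot$ binds tightest) containing, for all $e,f,g\in\mathrm{Exp}$, tests $b,c$, $v\in\mathrm{Out}$, $r,s,t,u\in S$: (G1) $e+_be\equiv e$; (G2) $e+_bf\equiv b;e+_bf$; (G3) $e+_bf\equiv f+_{\bar b}e$; (G4) $(e+_bf)+_cg\equiv e+_{bc}(f+_cg)$; (D1) $e\oplus_{r,s}(f+_bg)\equiv(e\oplus_{r,s}f)+_b(e\oplus_{r,s}g)$; (D2) $e\oplus_{r,s}(f\oplus_{t,u}g)\equiv e\oplus_{r,1}(f\oplus_{st,su}g)$; (D3) $b;(e\oplus_{r,s}f)\equiv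 b;(b;e\oplus_{r,s}b;f)$; (S1) $\mathtt 1;e\equiv e\equiv e;\mathtt 1$; (S2) $(e;f);g\equiv e;(f;g)$; (S3) $\mathtt 0;e\equiv\mathtt 0$; (S4) $(e\oplus_{r,s}f);g\equiv e;g\oplus_{r,s}f;g$; (S5) $(e+_bf);g\equiv e;g+_bf;g$; (S6) $v;e\equiv v$; (S7) $b;c\equiv bc$; (L1) $e^{(b)}\equiv e;e^{(b)}+_b\mathtt 1$; (C1) $\odot1\equiv\mathtt 1$; (C2) $\odot0;e\equiv\odot0$; (W1) $e\oplus_{r,s}e\equiv\odot(r+s);e$; (W2) $e\oplus_{r,s}f\equiv f\oplus_{s,r}e$; (W3) $e\oplus_{r,s}(f\oplus_{t,u}g)\equiv(e\oplus_{r,st}f)\oplus_{1,su}g$; (W4) $e\oplus_{ru,s}f\equiv(\odot u;e)\oplus_{r,s}f$; and closed under the rules (L2) if $e\equiv(f\oplus_{r,s}\mathtt 1)+_cg$ then $c;e^{(b)}\equiv c;((\odot(s^*r);f;e^{(b)})+_b\mathtt 1)$; (F1) if $g\equiv e;g+_bf$ and $E(e)_\alpha=0$ for all $\alpha\in\mathrm{At}$ then $g\equiv e^{(b)};f$. *)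

theory Defs
  imports Main
begin

datatype 't bexp = BZero | BOne | BPrim 't | BNot "'t bexp" | BOr "'t bexp" "'t bexp" | BAnd "'t bexp" "'t bexp"

text \<open>Atoms of the free Boolean algebra on a finite set of primitive tests T (the type 't)
  are represented by valuations, i.e. the set of primitive tests that are true.
  "alpha entails b" is evaluation of b under alpha.\<close>

primrec beval :: "'t set \<Rightarrow> 't bexp \<Rightarrow> bool" where
  "beval \<alpha> BZero = False"
| "beval \<alpha> BOne = True"
| "beval \<alpha> (BPrim t) = (t \<in> \<alpha>)"
| "beval \<alpha> (BNot b) = (\<not> beval \<alpha> b)"
| "beval \<alpha> (BOr b c) = (beval \<alpha> b \<or> beval \<alpha> c)"
| "beval \<alpha> (BAnd b c) = (beval \<alpha> b \<and> beval \<alpha> c)"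

definition bequiv :: "'t bexp \<Rightarrow> 't bexp \<Rightarrow> bool" where
  "bequiv b c \<longleftrightarrow> (\<forall>\<alpha>. beval \<alpha> b = beval \<alpha> c)"

datatype ('t, 'p, 'v, 's) exp =
    Act 'p
  | Test "'t bexp"
  | GChoice "('t, 'p, 'v, 's) exp" "'t bexp" "('t, 'p, 'v, 's) exp"
  | Seq "('t, 'p, 'v, 's) exp" "('t, 'p, 'v, 's) exp"
  | Loop "('t, 'p, 'v, 's) exp" "'t bexp"
  | Ret 'v
  | WChoice "('t, 'p, 'v, 's) exp" 's 's "('t, 'p, 'v, 's) exp"

definition odot :: "'s \<Rightarrow> ('t, 'p, 'v, 's::zero) exp" where
  "odot r = WChoice (Test BOne) r 0 (Test BZero)"

datatype ('v, 'p, 'x) out = Acc | Rej | OutV 'v | Tr 'p 'x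

definition is_aut :: "'x set \<Rightarrow> ('x \<Rightarrow> 't set \<Rightarrow> ('v, 'p, 'x) out \<Rightarrow> 's::zero) \<Rightarrow> bool" where
  "is_aut X \<beta> \<longleftrightarrow> (\<forall>x\<in>X. \<forall>\<alpha>. finite {d. \<beta> x \<alpha> d \<noteq> 0} \<and>
       (\<forall>p x'. \<beta> x \<alpha> (Tr p x') \<noteq> 0 \<longrightarrow> x' \<in> X))"

definition mass :: "('a \<Rightarrow> 's::comm_monoid_add) \<Rightarrow> 'a set \<Rightarrow> 's" where
  "mass \<nu> A = sum \<nu> {a\<in>A. \<nu> a \<noteq> 0}"

definition is_hom :: "'x set \<Rightarrow> ('x \<Rightarrow> 't set \<Rightarrow> ('v, 'p, 'x) out \<Rightarrow> 's::comm_monoid_add)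
    \<Rightarrow> 'y set \<Rightarrow> ('y \<Rightarrow> 't set \<Rightarrow> ('v, 'p, 'y) out \<Rightarrow> 's) \<Rightarrow> ('x \<Rightarrow> 'y) \<Rightarrow> bool" where
  "is_hom X \<beta> Y \<gamma> h \<longleftrightarrow> (\<forall>x\<in>X. h x \<in> Y) \<and>
     (\<forall>x\<in>X. \<forall>\<alpha>.
        \<gamma> (h x) \<alpha> Acc = \<beta> x \<alpha> Acc \<and>
        \<gamma> (h x) \<alpha> Rej = \<beta> x \<alpha> Rej \<and>
        (\<forall>v. \<gamma> (h x) \<alpha> (OutV v) = \<beta> x \<alpha> (OutV v)) \<and>
        (\<forall>p y. \<gamma> (h x) \<alpha> (Tr p y) = mass (\<beta> x \<alpha>) {Tr p x' | x'. x' \<in> X \<and> h x' = y}))"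

primrec deriv :: "('s::{semiring_0,monoid_mult} \<Rightarrow> 's) \<Rightarrow> ('t, 'p, 'v, 's) exp \<Rightarrow> 't set
    \<Rightarrow> ('v, 'p, ('t, 'p, 'v, 's) exp) out \<Rightarrow> 's" where
  "deriv st (Act p) \<alpha> y = (if y = Tr p (Test BOne) then 1 else 0)"
| "deriv st (Test b) \<alpha> y =
     (if beval \<alpha> b then (if y = Acc then 1 else 0) else (if y = Rej then 1 else 0))"
| "deriv st (Ret v) \<alpha> y = (if y = OutV v then 1 else 0)"
| "deriv st (GChoice e b f) \<alpha> y = (if beval \<alpha> b then deriv st e \<alpha> y else deriv st f \<alpha> y)"
| "deriv st (WChoice e r s f) \<alpha> y = r * deriv st e \<alpha> y + s * deriv st f \<alpha> y"
| "deriv st (Seq e f) \<alpha> y =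
     deriv st e \<alpha> Acc * deriv st f \<alpha> y +
     (case y of Acc \<Rightarrow> 0
        | Rej \<Rightarrow> deriv st e \<alpha> Rej
        | OutV v \<Rightarrow> deriv st e \<alpha> (OutV v)
        | Tr p g \<Rightarrow> (case g of Seq e' f' \<Rightarrow> (if f' = f then deriv st e \<alpha> (Tr p e') else 0)
                             | _ \<Rightarrow> 0))"
| "deriv st (Loop e b) \<alpha> y =
     (if beval \<alpha> b then
        (case y of Acc \<Rightarrow> 0
           | Rej \<Rightarrow> st (deriv st e \<alpha> Acc) * deriv st e \<alpha> Rej
           | OutV v \<Rightarrow> st (deriv st e \<alpha> Acc) * deriv st e \<alpha> (OutV v)
           | Tr p g \<Rightarrow> (case g of Seq e' l \<Rightarrow>
                          (if l = Loop e b then st (deriv st e \<alpha> Acc) * deriv st e \<alpha> (Tr p e') else 0)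
                        | _ \<Rightarrow> 0))
      else (if y = Acc then 1 else 0))"

primrec Eps :: "('t, 'p, 'v, 's::{semiring_0,monoid_mult}) exp \<Rightarrow> 't set \<Rightarrow> 's" where
  "Eps (Act p) \<alpha> = 0"
| "Eps (Ret v) \<alpha> = 0"
| "Eps (Test b) \<alpha> = (if beval \<alpha> b then 1 else 0)"
| "Eps (WChoice e r s f) \<alpha> = r * Eps e \<alpha> + s * Eps f \<alpha>"
| "Eps (GChoice e b f) \<alpha> = (if beval \<alpha> b then Eps e \<alpha> else Eps f \<alpha>)"
| "Eps (Seq e f) \<alpha> = Eps e \<alpha> * Eps f \<alpha>"
| "Eps (Loop e b) \<alpha> = (if beval \<alpha> (BNot b) then 1 else 0)"

inductive eqv :: "('s::{semiring_0,monoid_mult} \<Rightarrow> 's) \<Rightarrow> ('t, 'p, 'v, 's) exp \<Rightarrow> ('t, 'p, 'v, 's) exp \<Rightarrow> bool"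
  for st where
  refl: "eqv st e e"
| sym: "eqv st e f \<Longrightarrow> eqv st f e"
| trans: "eqv st e f \<Longrightarrow> eqv st f g \<Longrightarrow> eqv st e g"
| ba_test: "bequiv b c \<Longrightarrow> eqv st (Test b) (Test c)"
| ba_gchoice: "bequiv b c \<Longrightarrow> eqv st (GChoice e b f) (GChoice e c f)"
| ba_loop: "bequiv b c \<Longrightarrow> eqv st (Loop e b) (Loop e c)"
| cong_gchoice: "eqv st e e' \<Longrightarrow> eqv st f f' \<Longrightarrow> eqv st (GChoice e b f) (GChoice e' b f')"
| cong_seq: "eqv st e e' \<Longrightarrow> eqv st f f' \<Longrightarrow> eqv st (Seq e f) (Seq e' f')"
| cong_loop: "eqv st e e' \<Longrightarrow> eqv st (Loop e b) (Loop e' b)"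
| cong_wchoice: "eqv st e e' \<Longrightarrow> eqv st f f' \<Longrightarrow> eqv st (WChoice e r s f) (WChoice e' r s f')"
| G1: "eqv st (GChoice e b e) e"
| G2: "eqv st (GChoice e b f) (GChoice (Seq (Test b) e) b f)"
| G3: "eqv st (GChoice e b f) (GChoice f (BNot b) e)"
| G4: "eqv st (GChoice (GChoice e b f) c g) (GChoice e (BAnd b c) (GChoice f c g))"
| D1: "eqv st (WChoice e r s (GChoice f b g)) (GChoice (WChoice e r s f) b (WChoice e r s g))"
| D2: "eqv st (WChoice e r s (WChoice f t u g)) (WChoice e r 1 (WChoice f (s * t) (s * u) g))"
| D3: "eqv st (Seq (Test b) (WChoice e r s f))
              (Seq (Test b) (WChoice (Seq (Test b) e) r s (Seq (Test b) f)))"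
| S1a: "eqv st (Seq (Test BOne) e) e"
| S1b: "eqv st e (Seq e (Test BOne))"
| S2: "eqv st (Seq (Seq e f) g) (Seq e (Seq f g))"
| S3: "eqv st (Seq (Test BZero) e) (Test BZero)"
| S4: "eqv st (Seq (WChoice e r s f) g) (WChoice (Seq e g) r s (Seq f g))"
| S5: "eqv st (Seq (GChoice e b f) g) (GChoice (Seq e g) b (Seq f g))"
| S6: "eqv st (Seq (Ret v) e) (Ret v)"
| S7: "eqv st (Seq (Test b) (Test c)) (Test (BAnd b c))"
| L1: "eqv st (Loop e b) (GChoice (Seq e (Loop e b)) b (Test BOne))"
| C1: "eqv st (odot 1) (Test BOne)"
| C2: "eqv st (Seq (odot 0) e) (odot 0)"
| W1: "eqv st (WChoice e r s e) (Seq (odot (r + s)) e)"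
| W2: "eqv st (WChoice e r s f) (WChoice f s r e)"
| W3: "eqv st (WChoice e r s (WChoice f t u g)) (WChoice (WChoice e r (s * t) f) 1 (s * u) g)"
| W4: "eqv st (WChoice e (r * u) s f) (WChoice (Seq (odot u) e) r s f)"
| L2: "eqv st e (GChoice (WChoice f r s (Test BOne)) c g) \<Longrightarrow>
       eqv st (Seq (Test c) (Loop e b))
              (Seq (Test c) (GChoice (Seq (odot (st s * r)) (Seq f (Loop e b))) b (Test BOne)))"
| F1: "eqv st g (GChoice (Seq e g) b f) \<Longrightarrow> (\<forall>\<alpha>. Eps e \<alpha> = 0) \<Longrightarrow>
       eqv st g (Seq (Loop e b) f)"

definition eqv_rel :: "('s::{semiring_0,monoid_mult} \<Rightarrow> 's) \<Rightarrow> (('t, 'p, 'v, 's) exp \<times> ('t, 'p, 'v, 's) exp) set" where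
  "eqv_rel st = {(e, f). eqv st e f}"

definition quot :: "('s::{semiring_0,monoid_mult} \<Rightarrow> 's) \<Rightarrow> ('t, 'p, 'v, 's) exp set set" where
  "quot st = UNIV // eqv_rel st"

definition cls :: "('s::{semiring_0,monoid_mult} \<Rightarrow> 's) \<Rightarrow> ('t, 'p, 'v, 's) exp \<Rightarrow> ('t, 'p, 'v, 's) exp set" where
  "cls st e = eqv_rel st `` {e}"

text \<open>An enumeration of a finite set (generalized sums are well defined up to \<equiv>, so any enumeration works).\<close>
definition enum_list :: "'a set \<Rightarrow> 'a list" where
  "enum_list A = (SOME xs. distinct xs \<and> set xs = A)"

definition atom_test :: "'t set \<Rightarrow> 't bexp" where
  "atom_test \<alpha> = foldr (\<lambda>t b. BAnd (if t \<in> \<alpha> then BPrim t else BNot (BPrim t)) b)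
                        (enum_list (UNIV :: 't set)) BOne"

fun gsum :: "'t set list \<Rightarrow> ('t set \<Rightarrow> ('t, 'p, 'v, 's) exp) \<Rightarrow> ('t, 'p, 'v, 's) exp" where
  "gsum [] F = Test BZero"
| "gsum (\<gamma> # \<Phi>) F = GChoice (F \<gamma>) (atom_test \<gamma>) (gsum \<Phi> F)"

fun wsum :: "('s::{zero,one} \<times> ('t, 'p, 'v, 's) exp) list \<Rightarrow> ('t, 'p, 'v, 's) exp" where
  "wsum [] = odot 0"
| "wsum ((r, e) # rest) = WChoice e r 1 (wsum rest)"

text \<open>sys(d) with each formal product p x' replaced by p;h(x')\<close>
primrec sys_h :: "('x \<Rightarrow> ('t, 'p, 'v, 's) exp) \<Rightarrow> ('v, 'p, 'x) out \<Rightarrow> ('t, 'p, 'v, 's) exp" where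
  "sys_h h Rej = Test BZero"
| "sys_h h Acc = Test BOne"
| "sys_h h (OutV v) = Ret v"
| "sys_h h (Tr p x') = Seq (Act p) (h x')"

definition sol_rhs :: "('x \<Rightarrow> 't set \<Rightarrow> ('v, 'p, 'x) out \<Rightarrow> 's::{zero,one})
    \<Rightarrow> ('x \<Rightarrow> ('t, 'p, 'v, 's) exp) \<Rightarrow> 'x \<Rightarrow> ('t, 'p, 'v, 's) exp" where
  "sol_rhs \<beta> h x =
     gsum (enum_list (UNIV :: 't set set))
       (\<lambda>\<alpha>. wsum (map (\<lambda>d. (\<beta> x \<alpha> d, sys_h h d)) (enum_list {d. \<beta> x \<alpha> d \<noteq> 0})))"

definition is_solution :: "('s::{semiring_0,monoid_mult} \<Rightarrow> 's) \<Rightarrow> 'x set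
    \<Rightarrow> ('x \<Rightarrow> 't set \<Rightarrow> ('v, 'p, 'x) out \<Rightarrow> 's) \<Rightarrow> ('x \<Rightarrow> ('t, 'p, 'v, 's) exp) \<Rightarrow> bool" where
  "is_solution st X \<beta> h \<longleftrightarrow> (\<forall>x\<in>X. eqv st (h x) (sol_rhs \<beta> h x))"

definition positive_sr :: "'s::{semiring_0,monoid_mult} itself \<Rightarrow> bool" where
  "positive_sr _ \<longleftrightarrow> (\<forall>x y :: 's. x + y = 0 \<longrightarrow> x = 0 \<and> y = 0)"

definition refinement_sr :: "'s::{semiring_0,monoid_mult} itself \<Rightarrow> bool" where
  "refinement_sr _ \<longleftrightarrow> (\<forall>x y z w :: 's. x + y = z + w \<longrightarrow>
      (\<exists>s t u v. s + t = x \<and> s + u = z \<and> u + v = y \<and> t + v = w))"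

definition conway :: "('s::{semiring_0,monoid_mult} \<Rightarrow> 's) \<Rightarrow> bool" where
  "conway st \<longleftrightarrow> (\<forall>a b. st (a + b) = st a * st (b * st a)) \<and>
                  (\<forall>a b. st (a * b) = 1 + a * st (b * a) * b)"

end

theory Submission
  imports Defs
begin

context fixes st :: "'s::{semiring_0,monoid_mult} \<Rightarrow> 's" begin

abbreviation eq (infix "\<approx>" 50) where "e \<approx> f \<equiv> eqv st e f"

lemmas [trans] = eqv.trans
lemmas er = eqv.refl[of st]
lemmas es = eqv.sym[of st]

lemma seqL: "e \<approx> e' \<Longrightarrow> Seq e f \<approx> Seq e' f" by (simp add: eqv.cong_seq eqv.refl)
lemma seqR: "f \<approx> f' \<Longrightarrow> Seq e f \<approx> Seq e f'" by (simp add: eqv.cong_seq eqv.refl)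
lemma gcL: "e \<approx> e' \<Longrightarrow> GChoice e b f \<approx> GChoice e' b f" by (simp add: eqv.cong_gchoice eqv.refl)
lemma gcR: "f \<approx> f' \<Longrightarrow> GChoice e b f \<approx> GChoice e b f'" by (simp add: eqv.cong_gchoice eqv.refl)
lemma wcL: "e \<approx> e' \<Longrightarrow> WChoice e r s f \<approx> WChoice e' r s f" by (simp add: eqv.cong_wchoice eqv.refl)
lemma wcR: "f \<approx> f' \<Longrightarrow> WChoice e r s f \<approx> WChoice e r s f'" by (simp add: eqv.cong_wchoice eqv.refl)

lemma tseq_cong: "bequiv b c \<Longrightarrow> Seq (Test b) e \<approx> Seq (Test c) e"
  by (simp add: eqv.ba_test seqL)

lemma T1: "Seq (Test b) (Seq (Test c) e) \<approx> Seq (Test (BAnd b c)) e"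
proof -
  have "Seq (Test b) (Seq (Test c) e) \<approx> Seq (Seq (Test b) (Test c)) e" by (rule es, rule eqv.S2)
  also have "\<dots> \<approx> Seq (Test (BAnd b c)) e" by (rule seqL, rule eqv.S7)
  finally show ?thesis .
qed

lemma RG2: "GChoice e b f \<approx> GChoice e b (Seq (Test (BNot b)) f)"
proof -
  have "GChoice e b f \<approx> GChoice f (BNot b) e" by (rule eqv.G3)
  also have "\<dots> \<approx> GChoice (Seq (Test (BNot b)) f) (BNot b) e" by (rule eqv.G2)
  also have "\<dots> \<approx> GChoice e (BNot (BNot b)) (Seq (Test (BNot b)) f)" by (rule eqv.G3)
  also have "\<dots> \<approx> GChoice e b (Seq (Test (BNot b)) f)" by (rule eqv.ba_gchoice, simp add: bequiv_def)
  finally show ?thesis .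
qed

lemma Z_seq: "bequiv b BZero \<Longrightarrow> Seq (Test b) f \<approx> Test BZero"
  by (meson eqv.S3 eqv.trans tseq_cong)

lemma G1T0: "GChoice e b f \<approx> GChoice e b (Test BZero)" if "bequiv b BOne"
proof -
  have "GChoice e b f \<approx> GChoice e b (Seq (Test (BNot b)) f)" by (rule RG2)
  also have "\<dots> \<approx> GChoice e b (Test BZero)" by (rule gcR, rule Z_seq, use that in \<open>simp add: bequiv_def\<close>)
  finally show ?thesis .
qed

lemma G1T: "bequiv b BOne \<Longrightarrow> GChoice e b f \<approx> e"
  by (meson G1T0 eqv.G1 eqv.sym eqv.trans)

lemma BT: "Test b \<approx> GChoice (Test BOne) b (Test BZero)"
proof -
  have "Test b \<approx> GChoice (Test b) b (Test b)" by (rule es, rule eqv.G1)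
  also have "\<dots> \<approx> GChoice (Test b) b (Seq (Test (BNot b)) (Test b))" by (rule RG2)
  also have "\<dots> \<approx> GChoice (Test b) b (Test BZero)"
    by (rule gcR, meson eqv.S7 eqv.ba_test bequiv_def beval.simps eqv.trans)
  also have "\<dots> \<approx> GChoice (Seq (Test b) (Test BOne)) b (Test BZero)" by (rule gcL, rule eqv.S1b)
  also have "\<dots> \<approx> GChoice (Test BOne) b (Test BZero)" by (rule es, rule eqv.G2)
  finally show ?thesis .
qed

lemma BSeq: "Seq (Test b) e \<approx> GChoice e b (Test BZero)"
proof -
  have "Seq (Test b) e \<approx> Seq (GChoice (Test BOne) b (Test BZero)) e" by (rule seqL, rule BT)
  also have "\<dots> \<approx> GChoice (Seq (Test BOne) e) b (Seq (Test BZero) e)" by (rule eqv.S5)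
  also have "\<dots> \<approx> GChoice e b (Test BZero)" by (intro eqv.cong_gchoice eqv.S1a eqv.S3)
  finally show ?thesis .
qed

lemma BG: "Seq (Test b) (GChoice e b f) \<approx> Seq (Test b) e"
proof -
  have "Seq (Test b) (GChoice e b f) \<approx> GChoice (GChoice e b f) b (Test BZero)" by (rule BSeq)
  also have "\<dots> \<approx> GChoice (GChoice f (BNot b) e) b (Test BZero)" by (rule gcL, rule eqv.G3)
  also have "\<dots> \<approx> GChoice f (BAnd (BNot b) b) (GChoice e b (Test BZero))" by (rule eqv.G4)
  also have "\<dots> \<approx> GChoice f BZero (GChoice e b (Test BZero))" by (rule eqv.ba_gchoice, simp add: bequiv_def)
  also have "\<dots> \<approx> GChoice (GChoice e b (Test BZero)) (BNot BZero) f" by (rule eqv.G3)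
  also have "\<dots> \<approx> GChoice e b (Test BZero)" by (rule G1T, simp add: bequiv_def)
  also have "\<dots> \<approx> Seq (Test b) e" by (rule es, rule BSeq)
  finally show ?thesis .
qed

lemma guard_pos: assumes "\<forall>\<sigma>. beval \<sigma> c \<longrightarrow> beval \<sigma> b"
  shows "Seq (Test c) (GChoice e b f) \<approx> Seq (Test c) e"
proof -
  have q: "bequiv c (BAnd c b)" using assms by (auto simp: bequiv_def)
  have "Seq (Test c) (GChoice e b f) \<approx> Seq (Test (BAnd c b)) (GChoice e b f)" by (rule tseq_cong[OF q])
  also have "\<dots> \<approx> Seq (Test c) (Seq (Test b) (GChoice e b f))" by (rule es, rule T1)
  also have "\<dots> \<approx> Seq (Test c) (Seq (Test b) e)" by (rule seqR, rule BG)
  also have "\<dots> \<approx> Seq (Test (BAnd c b)) e" by (rule T1)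
  also have "\<dots> \<approx> Seq (Test c) e" by (rule es, rule tseq_cong[OF q])
  finally show ?thesis .
qed

lemma guard_neg: assumes "\<forall>\<sigma>. beval \<sigma> c \<longrightarrow> \<not> beval \<sigma> b"
  shows "Seq (Test c) (GChoice e b f) \<approx> Seq (Test c) f"
proof -
  have "Seq (Test c) (GChoice e b f) \<approx> Seq (Test c) (GChoice f (BNot b) e)" by (rule seqR, rule eqv.G3)
  also have "\<dots> \<approx> Seq (Test c) f" by (rule guard_pos, use assms in simp)
  finally show ?thesis .
qed

lemma test_or: assumes "Seq (Test b) e \<approx> Seq (Test b) f" "Seq (Test c) e \<approx> Seq (Test c) f"
  shows "Seq (Test (BOr b c)) e \<approx> Seq (Test (BOr b c)) f"
proof -
  have key: "Seq (Test (BOr b c)) g \<approx> GChoice (Seq (Test b) g) b (Seq (Test (BAnd (BNot b) c)) g)" for g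
  proof -
    have "Seq (Test (BOr b c)) g \<approx> GChoice (Seq (Test (BOr b c)) g) b (Seq (Test (BOr b c)) g)"
      by (rule es, rule eqv.G1)
    also have "\<dots> \<approx> GChoice (Seq (Test b) (Seq (Test (BOr b c)) g)) b (Seq (Test (BOr b c)) g)"
      by (rule eqv.G2)
    also have "\<dots> \<approx> GChoice (Seq (Test b) (Seq (Test (BOr b c)) g)) b (Seq (Test (BNot b)) (Seq (Test (BOr b c)) g))"
      by (rule RG2)
    also have "\<dots> \<approx> GChoice (Seq (Test (BAnd b (BOr b c))) g) b (Seq (Test (BAnd (BNot b) (BOr b c))) g)"
      by (intro eqv.cong_gchoice T1)
    also have "\<dots> \<approx> GChoice (Seq (Test b) g) b (Seq (Test (BAnd (BNot b) c)) g)"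
      by (intro eqv.cong_gchoice tseq_cong) (auto simp: bequiv_def)
    finally show ?thesis .
  qed
  have c2: "Seq (Test (BAnd (BNot b) c)) e \<approx> Seq (Test (BAnd (BNot b) c)) f"
  proof -
    have "Seq (Test (BAnd (BNot b) c)) e \<approx> Seq (Test (BNot b)) (Seq (Test c) e)" by (rule es, rule T1)
    also have "\<dots> \<approx> Seq (Test (BNot b)) (Seq (Test c) f)" by (rule seqR, rule assms(2))
    also have "\<dots> \<approx> Seq (Test (BAnd (BNot b) c)) f" by (rule T1)
    finally show ?thesis .
  qed
  have "Seq (Test (BOr b c)) e \<approx> GChoice (Seq (Test b) e) b (Seq (Test (BAnd (BNot b) c)) e)" by (rule key)
  also have "\<dots> \<approx> GChoice (Seq (Test b) f) b (Seq (Test (BAnd (BNot b) c)) f)"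
    by (intro eqv.cong_gchoice assms(1) c2)
  also have "\<dots> \<approx> Seq (Test (BOr b c)) f" by (rule es, rule key)
  finally show ?thesis .
qed

end

definition sc :: "'s::times \<Rightarrow> ('s \<times> 'a) list \<Rightarrow> ('s \<times> 'a) list" where
  "sc t L = map (\<lambda>(r,x). (t*r, x)) L"

lemma sc_simps[simp]: "sc t [] = []" "sc t ((r,x)#L) = (t*r,x) # sc t L" "sc t (L@M) = sc t L @ sc t M"
  by (auto simp: sc_def)

context fixes st :: "'s::{semiring_0,monoid_mult} \<Rightarrow> 's" begin

lemma Z1: "eqv st x (WChoice x 1 0 (Test BZero))"
proof -
  have "eqv st x (Seq (Test BOne) x)" by (rule es, rule eqv.S1a)
  also have "eqv st \<dots> (Seq (odot 1) x)" by (rule seqL, rule es, rule eqv.C1)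
  also have "eqv st \<dots> (WChoice (Seq (Test BOne) x) 1 0 (Seq (Test BZero) x))" unfolding odot_def by (rule eqv.S4)
  also have "eqv st \<dots> (WChoice x 1 0 (Test BZero))" by (intro eqv.cong_wchoice eqv.S1a eqv.S3)
  finally show ?thesis .
qed

lemma Z0: "eqv st (WChoice y 0 s x) (WChoice (odot 0) 1 s x)"
proof -
  have "eqv st (WChoice y (1*0) s x) (WChoice (Seq (odot 0) y) 1 s x)" by (rule eqv.W4)
  also have "eqv st \<dots> (WChoice (odot 0) 1 s x)" by (rule wcL, rule eqv.C2)
  finally show ?thesis by simp
qed

lemma Z0': "eqv st (WChoice y 0 s x) (WChoice y' 0 s x)"
  by (meson Z0 eqv.sym eqv.trans)

lemma Z0r: "eqv st (WChoice x r 0 y) (WChoice x r 0 y')"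
  by (meson Z0' eqv.W2 eqv.sym eqv.trans)

lemma Z2: "eqv st (WChoice x 1 0 y) x"
  by (meson Z0r Z1 eqv.sym eqv.trans)

lemma zdrop: "eqv st (WChoice y 0 1 x) x"
  by (meson Z2 eqv.W2 eqv.trans)

lemma zdrop0: "eqv st (WChoice (odot 0) 1 1 x) x"
  by (meson Z0 zdrop eqv.sym eqv.trans)

lemma OS: "eqv st (Seq (odot t) x) (WChoice x t 0 (Test BZero))"
proof -
  have "eqv st (Seq (odot t) x) (WChoice (Seq (Test BOne) x) t 0 (Seq (Test BZero) x))" unfolding odot_def by (rule eqv.S4)
  also have "eqv st \<dots> (WChoice x t 0 (Test BZero))" by (intro eqv.cong_wchoice eqv.S1a eqv.S3)
  finally show ?thesis .
qed

lemma odot1: "eqv st (Seq (odot 1) x) x"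
  by (meson eqv.C1 eqv.S1a eqv.trans seqL)

lemma Rodot: "eqv st (WChoice x r s (odot 0)) (WChoice x r 1 (odot 0))"
  using eqv.D2[of st x r s "Test BOne" 0 0 "Test BZero"] by (simp add: odot_def)

lemma single: "eqv st (wsum [(r,e)]) (Seq (odot r) e)"
proof -
  have "eqv st (wsum [(r,e)]) (WChoice e r 0 (odot 0))" by simp (rule es, rule Rodot)
  also have "eqv st \<dots> (WChoice e r 0 (Test BZero))" by (rule Z0r)
  also have "eqv st \<dots> (Seq (odot r) e)" by (rule es, rule OS)
  finally show ?thesis .
qed

lemma single1: "eqv st (wsum [(1,e)]) e"
  by (meson eqv.trans odot1 single)

lemma WT: "eqv st (WChoice e w t g) (WChoice e w 1 (Seq (odot t) g))"
proof -
  have "eqv st (WChoice e w t g) (WChoice e w t (WChoice g 1 0 (Test BZero)))" by (rule wcR, rule Z1)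
  also have "eqv st \<dots> (WChoice e w 1 (WChoice g (t*1) (t*0) (Test BZero)))" by (rule eqv.D2)
  also have "eqv st \<dots> (WChoice e w 1 (Seq (odot t) g))" by simp (rule wcR, rule es, rule OS)
  finally show ?thesis .
qed

lemma pair: "eqv st (WChoice e r s f) (wsum [(r,e),(s,f)])"
proof -
  have "eqv st (WChoice e r s f) (WChoice e r 1 (Seq (odot s) f))" by (rule WT)
  also have "eqv st \<dots> (wsum [(r,e),(s,f)])" by simp (rule wcR, rule es, rule single[simplified])
  finally show ?thesis .
qed

lemma swap: "eqv st (WChoice e r 1 (WChoice f t 1 g)) (WChoice f t 1 (WChoice e r 1 g))"
proof -
  have "eqv st (WChoice e r 1 (WChoice f t 1 g)) (WChoice (WChoice e r (1*t) f) 1 (1*1) g)" by (rule eqv.W3)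
  also have "eqv st \<dots> (WChoice (WChoice f t (1*r) e) 1 (1*1) g)" by simp (rule wcL, rule eqv.W2)
  also have "eqv st \<dots> (WChoice f t 1 (WChoice e r 1 g))" by (rule es, rule eqv.W3)
  finally show ?thesis .
qed

lemma merge: "eqv st (WChoice e r 1 (WChoice e s 1 g)) (WChoice e (r+s) 1 g)"
proof -
  have "eqv st (WChoice e r 1 (WChoice e s 1 g)) (WChoice (WChoice e r (1*s) e) 1 (1*1) g)" by (rule eqv.W3)
  also have "eqv st \<dots> (WChoice (Seq (odot (r+s)) e) 1 1 g)" by simp (rule wcL, rule eqv.W1)
  also have "eqv st \<dots> (WChoice e (1*(r+s)) 1 g)" by (rule es, rule eqv.W4)
  finally show ?thesis by simp
qed

lemma scale: "eqv st (Seq (odot t) (wsum L)) (wsum (sc t L))"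
proof (induction L)
  case Nil
  have "eqv st (Seq (odot t) (odot 0)) (WChoice (odot 0) t 0 (Test BZero))" by (rule OS)
  also have "eqv st \<dots> (WChoice (Test BZero) 0 t (odot 0))" by (rule eqv.W2)
  also have "eqv st \<dots> (WChoice (Test BZero) 0 1 (odot 0))" by (rule Rodot)
  also have "eqv st \<dots> (odot 0)" by (rule zdrop)
  finally show ?case by simp
next
  case (Cons a L)
  obtain r e where a: "a = (r,e)" by force
  have "eqv st (Seq (odot t) (WChoice e r 1 (wsum L))) (WChoice (WChoice e r 1 (wsum L)) t 0 (Test BZero))" by (rule OS)
  also have "eqv st \<dots> (WChoice (Test BZero) 0 t (WChoice e r 1 (wsum L)))" by (rule eqv.W2)
  also have "eqv st \<dots> (WChoice (Test BZero) 0 1 (WChoice e (t*r) (t*1) (wsum L)))" by (rule eqv.D2)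
  also have "eqv st \<dots> (WChoice e (t*r) t (wsum L))" by simp (rule zdrop)
  also have "eqv st \<dots> (WChoice e (t*r) 1 (Seq (odot t) (wsum L)))" by (rule WT)
  also have "eqv st \<dots> (WChoice e (t*r) 1 (wsum (sc t L)))" by (rule wcR, rule Cons)
  finally show ?case by (simp add: a)
qed

lemma wapp: "eqv st (wsum (xs @ ys)) (WChoice (wsum xs) 1 1 (wsum ys))"
proof (induction xs)
  case Nil
  then show ?case by simp (rule es, rule zdrop0)
next
  case (Cons a xs)
  obtain r e where a: "a = (r,e)" by force
  have "eqv st (WChoice e r 1 (wsum (xs@ys))) (WChoice e r 1 (WChoice (wsum xs) 1 1 (wsum ys)))" by (rule wcR, rule Cons)
  also have "eqv st \<dots> (WChoice (WChoice e r (1*1) (wsum xs)) 1 (1*1) (wsum ys))" by (rule eqv.W3)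
  finally show ?case by (simp add: a)
qed

lemma flat1: "eqv st (WChoice (wsum M) r 1 (wsum R)) (wsum (sc r M @ R))"
proof -
  have "eqv st (WChoice (wsum M) (1*r) 1 (wsum R)) (WChoice (Seq (odot r) (wsum M)) 1 1 (wsum R))" by (rule eqv.W4)
  also have "eqv st \<dots> (WChoice (wsum (sc r M)) 1 1 (wsum R))" by (rule wcL, rule scale)
  also have "eqv st \<dots> (wsum (sc r M @ R))" by (rule es, rule wapp)
  finally show ?thesis by simp
qed

lemma pairw: "eqv st (WChoice (wsum M) r s (wsum N)) (wsum (sc r M @ sc s N))"
proof -
  have "eqv st (WChoice (wsum M) r s (wsum N)) (wsum [(r,wsum M),(s,wsum N)])" by (rule pair)
  also have "eqv st \<dots> (WChoice (wsum M) r 1 (wsum (sc s N @ [])))" by simp (rule wcR, rule flat1[where R="[]", simplified])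
  also have "eqv st \<dots> (wsum (sc r M @ sc s N))" using flat1 by simp
  finally show ?thesis .
qed

lemma wseq: "eqv st (Seq (wsum L) f) (wsum (map (\<lambda>(r,e). (r, Seq e f)) L))"
proof (induction L)
  case Nil
  then show ?case by simp (rule eqv.C2)
next
  case (Cons a L)
  obtain r e where a: "a = (r,e)" by force
  have "eqv st (Seq (WChoice e r 1 (wsum L)) f) (WChoice (Seq e f) r 1 (Seq (wsum L) f))" by (rule eqv.S4)
  also have "eqv st \<dots> (WChoice (Seq e f) r 1 (wsum (map (\<lambda>(r,e). (r, Seq e f)) L)))" by (rule wcR, rule Cons)
  finally show ?case by (simp add: a)
qed

lemma wcong: "list_all2 (\<lambda>(r,x) (r',y). r = r' \<and> eqv st x y) L L' \<Longrightarrow> eqv st (wsum L) (wsum L')"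
proof (induction L arbitrary: L')
  case Nil
  then show ?case by (simp add: eqv.refl)
next
  case (Cons a L)
  then obtain b L'' where L': "L' = b # L''" by (cases L') auto
  obtain r e where a: "a = (r,e)" by force
  obtain r' e' where b: "b = (r',e')" by force
  show ?case using Cons.prems Cons.IH unfolding L' a b by (auto intro: eqv.cong_wchoice)
qed

end

fun meas :: "('s::comm_monoid_add \<times> 'd) list \<Rightarrow> 'd \<Rightarrow> 's" where
  "meas [] d = 0"
| "meas ((r,d')#L) d = (if d' = d then r else 0) + meas L d"

lemma meas_app[simp]: "meas (L @ M) d = meas L d + meas M d"
  apply (induction L) apply simp apply (case_tac a) apply (auto simp: add.assoc) done

lemma meas_sc[simp]: "meas (sc (t::'s::semiring_0) L) d = t * meas L d"
proof (induction L)
  case (Cons a L) then show ?case by (cases a) (auto simp: distrib_left)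
qed simp

definition WS :: "('d \<Rightarrow> ('t,'p,'v,'s) exp) \<Rightarrow> ('s \<times> 'd) list \<Rightarrow> ('t,'p,'v,'s::{zero,one}) exp" where
  "WS sy L = wsum (map (\<lambda>(r,k). (r, sy k)) L)"

lemma WS_simps[simp]: "WS sy [] = odot 0" "WS sy ((r,k)#L) = WChoice (sy k) r 1 (WS sy L)"
  by (auto simp: WS_def)

lemma WS_app: "WS sy (L @ M) = wsum (map (\<lambda>(r,k). (r, sy k)) L @ map (\<lambda>(r,k). (r, sy k)) M)"
  by (simp add: WS_def)

lemma map_sc: "map (\<lambda>(r,k). (r, f k)) (sc t L) = sc t (map (\<lambda>(r,k). (r, f k)) L)"
  by (induction L) (auto simp: sc_def)

context fixes st :: "'s::{semiring_0,monoid_mult} \<Rightarrow> 's" begin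

lemma zeros: "eqv st (wsum (map (\<lambda>k. (0, sy k)) D)) (odot 0)"
proof (induction D)
  case Nil then show ?case by (simp add: eqv.refl)
next
  case (Cons a D)
  then show ?case by simp (meson zdrop eqv.trans)
qed

lemma ADD: "distinct D \<Longrightarrow> k \<in> set D \<Longrightarrow>
  eqv st (WChoice (sy k) r 1 (wsum (map (\<lambda>k'. (w k', sy k')) D)))
         (wsum (map (\<lambda>k'. ((if k' = k then r else 0) + w k', sy k')) D))"
proof (induction D)
  case Nil then show ?case by simp
next
  case (Cons k0 D)
  show ?case
  proof (cases "k0 = k")
    case True
    have m: "map (\<lambda>k'. ((if k' = k then r else 0) + w k', sy k')) D = map (\<lambda>k'. (w k', sy k')) D"
      using Cons.prems True by (auto intro!: map_cong)
    have "eqv st (WChoice (sy k) r 1 (WChoice (sy k) (w k) 1 (wsum (map (\<lambda>k'. (w k', sy k')) D))))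
       (WChoice (sy k) (r + w k) 1 (wsum (map (\<lambda>k'. (w k', sy k')) D)))" by (rule merge)
    then show ?thesis by (simp add: True m)
  next
    case False
    have "eqv st (WChoice (sy k) r 1 (WChoice (sy k0) (w k0) 1 (wsum (map (\<lambda>k'. (w k', sy k')) D))))
              (WChoice (sy k0) (w k0) 1 (WChoice (sy k) r 1 (wsum (map (\<lambda>k'. (w k', sy k')) D))))"
      by (rule swap)
    also have "eqv st \<dots> (WChoice (sy k0) (w k0) 1 (wsum (map (\<lambda>k'. ((if k' = k then r else 0) + w k', sy k')) D)))"
      using Cons False by (intro wcR) auto
    finally show ?thesis using False by simp
  qed
qed

lemma canon1: "distinct D \<Longrightarrow> snd ` set L \<subseteq> set D \<Longrightarrow>
   eqv st (WS sy L) (wsum (map (\<lambda>k. (meas L k, sy k)) D))"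
proof (induction L)
  case Nil
  then show ?case by simp (rule eqv.sym, rule zeros)
next
  case (Cons a L)
  obtain r k where a: "a = (r,k)" by force
  have "eqv st (WChoice (sy k) r 1 (WS sy L)) (WChoice (sy k) r 1 (wsum (map (\<lambda>k. (meas L k, sy k)) D)))"
    using Cons a by (intro wcR) auto
  also have "eqv st \<dots> (wsum (map (\<lambda>k'. ((if k' = k then r else 0) + meas L k', sy k')) D))"
    using Cons a by (intro ADD) auto
  finally show ?case using a by (simp add: eq_commute)
qed

lemma canon: "meas L1 = meas L2 \<Longrightarrow> eqv st (WS sy L1) (WS sy L2)"
proof -
  assume m: "meas L1 = meas L2"
  let ?D = "remdups (map snd (L1 @ L2))"
  have "eqv st (WS sy L1) (wsum (map (\<lambda>k. (meas L1 k, sy k)) ?D))" by (rule canon1) auto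
  also have "eqv st \<dots> (WS sy L2)" unfolding m by (rule eqv.sym, rule canon1) auto
  finally show ?thesis .
qed

end

lemma enum_list_prop: "finite A \<Longrightarrow> distinct (enum_list A) \<and> set (enum_list A) = A"
  unfolding enum_list_def by (rule someI_ex) (use finite_distinct_list in blast)

lemma foldr_atom: "beval \<sigma> (foldr (\<lambda>t b. BAnd (if t \<in> \<alpha> then BPrim t else BNot (BPrim t)) b) xs BOne)
   \<longleftrightarrow> (\<forall>t\<in>set xs. t \<in> \<sigma> \<longleftrightarrow> t \<in> \<alpha>)"
  by (induction xs) auto

lemma atom_sem: "beval \<sigma> (atom_test (\<alpha>::'t::finite set)) \<longleftrightarrow> \<sigma> = \<alpha>"
proof -
  have "set (enum_list (UNIV::'t set)) = UNIV" using enum_list_prop[of "UNIV::'t set"] by simp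
  then show ?thesis unfolding atom_test_def foldr_atom by auto
qed

abbreviation pre :: "'t set \<Rightarrow> ('t,'p,'v,'s) exp \<Rightarrow> ('t,'p,'v,'s) exp" where
  "pre \<alpha> e \<equiv> Seq (Test (atom_test \<alpha>)) e"

abbreviation sy where "sy \<equiv> sys_h id"

lemma meas_single[simp]: "meas [(r,d)] y = (if d = y then r else 0)" by simp

lemma meas_filter: "meas (filter (\<lambda>(r,d). d \<noteq> c) L) y = (if y = c then 0 else meas L y)"
proof (induction L)
  case (Cons a L) then show ?case by (cases a) auto
qed simp

abbreviation Tm where "Tm f \<equiv> map_out id id (\<lambda>g. Seq g f)"

lemma measT: "meas (map (\<lambda>(r,d). (r, Tm f d)) L) y =
  (case y of Acc \<Rightarrow> meas L Acc | Rej \<Rightarrow> meas L Rej | OutV v \<Rightarrow> meas L (OutV v)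
     | Tr p g \<Rightarrow> (case g of Seq e' f' \<Rightarrow> if f' = f then meas L (Tr p e') else 0 | _ \<Rightarrow> 0))"
proof (induction L)
  case Nil then show ?case by (auto split: out.split exp.split)
next
  case (Cons a L)
  obtain r d where a: "a = (r,d)" by force
  show ?case using Cons unfolding a
    by (cases d; cases y) (auto split: out.split exp.split)
qed

context fixes st :: "'s::{semiring_0,monoid_mult} \<Rightarrow> 's" begin

lemma alpha_wcong: "eqv st (pre \<alpha> e) (pre \<alpha> e') \<Longrightarrow> eqv st (pre \<alpha> f) (pre \<alpha> f') \<Longrightarrow>
  eqv st (pre \<alpha> (WChoice e r s f)) (pre \<alpha> (WChoice e' r s f'))"
  by (meson eqv.D3 eqv.sym eqv.trans seqR wcL wcR)

lemma alpha_seq: "eqv st (pre \<alpha> e) (pre \<alpha> e') \<Longrightarrow> eqv st (pre \<alpha> (Seq e f)) (pre \<alpha> (Seq e' f))"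
  by (meson eqv.S2 eqv.sym eqv.trans seqL)

lemma atomwise_list: "(\<forall>\<alpha>\<in>set L. eqv st (pre \<alpha> e) (pre \<alpha> f)) \<Longrightarrow>
  eqv st (Seq (Test (foldr (\<lambda>\<alpha> b. BOr (atom_test \<alpha>) b) L BZero)) e) (Seq (Test (foldr (\<lambda>\<alpha> b. BOr (atom_test \<alpha>) b) L BZero)) f)"
proof (induction L)
  case Nil then show ?case by simp (meson eqv.S3 eqv.sym eqv.trans)
next
  case (Cons a L) then show ?case by simp (rule test_or, auto)
qed

lemma atomwise: "(\<And>\<alpha>::'t::finite set. eqv st (pre \<alpha> e) (pre \<alpha> f)) \<Longrightarrow> eqv st e f"
proof -
  assume h: "\<And>\<alpha>::'t::finite set. eqv st (pre \<alpha> e) (pre \<alpha> f)"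
  let ?D = "foldr (\<lambda>\<alpha> b. BOr (atom_test \<alpha>) b) (enum_list (UNIV::'t set set)) BZero"
  have sD: "set (enum_list (UNIV::'t set set)) = UNIV" using enum_list_prop[of "UNIV::'t set set"] by simp
  have ev: "beval \<sigma> (foldr (\<lambda>\<alpha> b. BOr (atom_test \<alpha>) b) L BZero) \<longleftrightarrow> \<sigma> \<in> set L" for \<sigma> :: "'t set" and L
    by (induction L) (auto simp: atom_sem)
  have bq: "bequiv ?D BOne" unfolding bequiv_def using ev sD by auto
  have "eqv st e (Seq (Test BOne) e)" by (rule es, rule eqv.S1a)
  also have "eqv st \<dots> (Seq (Test ?D) e)" by (rule tseq_cong, use bq in \<open>simp add: bequiv_def\<close>)
  also have "eqv st \<dots> (Seq (Test ?D) f)" by (rule atomwise_list, use h in auto)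
  also have "eqv st \<dots> (Seq (Test BOne) f)" by (rule tseq_cong[OF bq])
  also have "eqv st \<dots> f" by (rule eqv.S1a)
  finally show ?thesis .
qed

lemma pre_pos: "beval \<alpha> b \<Longrightarrow> eqv st (pre (\<alpha>::'t::finite set) (GChoice e b f)) (pre \<alpha> e)"
  by (rule guard_pos) (simp add: atom_sem)

lemma pre_neg: "\<not> beval \<alpha> b \<Longrightarrow> eqv st (pre (\<alpha>::'t::finite set) (GChoice e b f)) (pre \<alpha> f)"
  by (rule guard_neg) (simp add: atom_sem)

lemma pre_test: "eqv st (pre (\<alpha>::'t::finite set) (Test b)) (pre \<alpha> (Test (if beval \<alpha> b then BOne else BZero)))"
proof -
  have "eqv st (pre \<alpha> (Test b)) (Test (BAnd (atom_test \<alpha>) b))" by (rule eqv.S7)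
  also have "eqv st \<dots> (Test (BAnd (atom_test \<alpha>) (if beval \<alpha> b then BOne else BZero)))"
    by (rule eqv.ba_test) (auto simp: bequiv_def atom_sem)
  also have "eqv st \<dots> (pre \<alpha> (Test (if beval \<alpha> b then BOne else BZero)))" by (rule es, rule eqv.S7)
  finally show ?thesis .
qed

lemma sing_WS: "eqv st (WS sy [(1,d)]) (sy d)"
  using single1[of st "sy d"] by (simp add: WS_def)

lemma WS_app_eq: "eqv st (WS s (A@B)) (WChoice (WS s A) 1 1 (WS s B))"
  unfolding WS_def by simp (rule wapp)

lemma WS_scale: "eqv st (Seq (odot t) (WS s L)) (WS s (sc t L))"
  unfolding WS_def map_sc by (rule scale)

lemma split_acc: "eqv st (WS sy L) (WChoice (WS sy (filter (\<lambda>(r,d). d \<noteq> Acc) L)) 1 1 (Seq (odot (meas L Acc)) (Test BOne)))"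
proof -
  let ?L' = "filter (\<lambda>(r,d). d \<noteq> Acc) L"
  have "eqv st (WS sy L) (WS sy (?L' @ [(meas L Acc, Acc)]))"
    by (rule canon) (auto simp: meas_filter)
  also have "eqv st \<dots> (WChoice (WS sy ?L') 1 1 (WS sy [(meas L Acc, Acc)]))" by (rule WS_app_eq)
  also have "eqv st \<dots> (WChoice (WS sy ?L') 1 1 (Seq (odot (meas L Acc)) (Test BOne)))"
    by (rule wcR) (use single[of st "meas L Acc" "Test BOne"] in \<open>simp add: WS_def\<close>)
  finally show ?thesis .
qed

lemma sysT: "d \<noteq> Acc \<Longrightarrow> eqv st (Seq (sy d) f) (sy (Tm f d))"
  by (cases d) (auto intro: eqv.S3 eqv.S6 eqv.S2)

lemma WS_seqT: "\<forall>(r,d)\<in>set L. d \<noteq> Acc \<Longrightarrow> eqv st (Seq (WS sy L) f) (WS sy (map (\<lambda>(r,d). (r, Tm f d)) L))"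
proof (induction L)
  case Nil then show ?case by simp (rule eqv.C2)
next
  case (Cons a L)
  obtain r d where a: "a = (r,d)" by force
  have "eqv st (Seq (WChoice (sy d) r 1 (WS sy L)) f) (WChoice (Seq (sy d) f) r 1 (Seq (WS sy L) f))" by (rule eqv.S4)
  also have "eqv st \<dots> (WChoice (sy (Tm f d)) r 1 (WS sy (map (\<lambda>(r,d). (r, Tm f d)) L)))"
  proof -
    from Cons.prems a have pr: "\<forall>(r,d)\<in>set L. d \<noteq> Acc" "d \<noteq> Acc" by auto
    show ?thesis by (intro eqv.cong_wchoice sysT Cons.IH pr)
  qed
  finally show ?case using a by (simp only: list.map prod.case WS_simps)
qed

lemma alpha_odot: "eqv st (pre \<alpha> g) (pre \<alpha> (WS s M)) \<Longrightarrow> eqv st (pre \<alpha> (Seq (odot a) g)) (pre \<alpha> (WS s (sc a M)))"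
proof -
  assume h: "eqv st (pre \<alpha> g) (pre \<alpha> (WS s M))"
  have "eqv st (pre \<alpha> (Seq (odot a) g)) (pre \<alpha> (WChoice g a 0 (Test BZero)))" by (rule seqR, rule OS)
  also have "eqv st \<dots> (pre \<alpha> (WChoice (WS s M) a 0 (Test BZero)))" by (rule alpha_wcong[OF h er])
  also have "eqv st \<dots> (pre \<alpha> (Seq (odot a) (WS s M)))" by (rule seqR, rule es, rule OS)
  also have "eqv st \<dots> (pre \<alpha> (WS s (sc a M)))" by (rule seqR, rule WS_scale)
  finally show ?thesis .
qed

lemma WT2: "eqv st (WChoice F 1 1 (Seq (odot a) G)) (WChoice F 1 a G)"
proof -
  have "eqv st (WChoice F 1 1 (Seq (odot a) G)) (WChoice (Seq (odot a) G) 1 1 F)" by (rule eqv.W2)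
  also have "eqv st \<dots> (WChoice G (1*a) 1 F)" by (rule es, rule eqv.W4)
  also have "eqv st \<dots> (WChoice F 1 a G)" by simp (rule eqv.W2)
  finally show ?thesis .
qed

end

context fixes st :: "'s::{semiring_0,monoid_mult} \<Rightarrow> 's" begin

definition FTP :: "('t::finite,'p,'v,'s) exp \<Rightarrow> bool" where
  "FTP e \<longleftrightarrow> (\<forall>\<alpha>. \<exists>L. eqv st (pre \<alpha> e) (pre \<alpha> (WS sy L)) \<and> meas L = deriv st e \<alpha>)"

lemma FT_single: "eqv st e (sy d) \<Longrightarrow> (\<And>y. deriv st e \<alpha> y = (if d = y then 1 else 0)) \<Longrightarrow>
   \<exists>L. eqv st (pre \<alpha> e) (pre \<alpha> (WS sy L)) \<and> meas L = deriv st e \<alpha>"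
  apply (rule exI[of _ "[(1,d)]"])
  apply (intro conjI)
   apply (meson eqv.sym eqv.trans seqR sing_WS)
  by auto

lemma FT_act: "FTP (Act p)"
  unfolding FTP_def
  apply (intro allI FT_single[where d="Tr p (Test BOne)"])
  by (auto intro: eqv.S1b)

lemma FT_ret: "FTP (Ret v)"
  unfolding FTP_def
  by (intro allI FT_single[where d="OutV v"]) (auto intro: eqv.refl)

lemma FT_test: "FTP (Test b)"
  unfolding FTP_def
proof
  fix \<alpha> :: "'a set"
  let ?d = "if beval \<alpha> b then Acc else Rej"
  have "eqv st (pre \<alpha> (Test b)) (pre \<alpha> (Test (if beval \<alpha> b then BOne else BZero)))" by (rule pre_test)
  also have "eqv st \<dots> (pre \<alpha> (WS sy [(1,?d)]))"
    by (rule seqR, rule es) (use sing_WS[of st ?d] in auto)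
  finally show "\<exists>L. eqv st (pre \<alpha> (Test b)) (pre \<alpha> (WS sy L)) \<and> meas L = deriv st (Test b) \<alpha>"
    by (intro exI[of _ "[(1,?d)]"] conjI) auto
qed

lemma FT_g: "FTP e \<Longrightarrow> FTP f \<Longrightarrow> FTP (GChoice e b f)"
  unfolding FTP_def
proof
  fix \<alpha>
  assume IH: "\<forall>\<alpha>. \<exists>L. eqv st (pre \<alpha> e) (pre \<alpha> (WS sy L)) \<and> meas L = deriv st e \<alpha>"
    "\<forall>\<alpha>. \<exists>L. eqv st (pre \<alpha> f) (pre \<alpha> (WS sy L)) \<and> meas L = deriv st f \<alpha>"
  show "\<exists>L. eqv st (pre \<alpha> (GChoice e b f)) (pre \<alpha> (WS sy L)) \<and> meas L = deriv st (GChoice e b f) \<alpha>"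
  proof (cases "beval \<alpha> b")
    case True
    obtain L where L: "eqv st (pre \<alpha> e) (pre \<alpha> (WS sy L))" "meas L = deriv st e \<alpha>" using IH by blast
    show ?thesis using L True pre_pos[OF True, of st e f] by (intro exI[of _ L]) (auto intro: eqv.trans)
  next
    case False
    obtain L where L: "eqv st (pre \<alpha> f) (pre \<alpha> (WS sy L))" "meas L = deriv st f \<alpha>" using IH by blast
    show ?thesis using L False pre_neg[OF False, of st e f] by (intro exI[of _ L]) (auto intro: eqv.trans)
  qed
qed

lemma FT_w: "FTP e \<Longrightarrow> FTP f \<Longrightarrow> FTP (WChoice e r s f)"
  unfolding FTP_def
proof
  fix \<alpha>
  assume IH: "\<forall>\<alpha>. \<exists>L. eqv st (pre \<alpha> e) (pre \<alpha> (WS sy L)) \<and> meas L = deriv st e \<alpha>"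
    "\<forall>\<alpha>. \<exists>L. eqv st (pre \<alpha> f) (pre \<alpha> (WS sy L)) \<and> meas L = deriv st f \<alpha>"
  obtain Le where Le: "eqv st (pre \<alpha> e) (pre \<alpha> (WS sy Le))" "meas Le = deriv st e \<alpha>" using IH by blast
  obtain Lf where Lf: "eqv st (pre \<alpha> f) (pre \<alpha> (WS sy Lf))" "meas Lf = deriv st f \<alpha>" using IH by blast
  have "eqv st (pre \<alpha> (WChoice e r s f)) (pre \<alpha> (WChoice (WS sy Le) r s (WS sy Lf)))"
    by (rule alpha_wcong[OF Le(1) Lf(1)])
  also have "eqv st \<dots> (pre \<alpha> (WS sy (sc r Le @ sc s Lf)))"
    by (rule seqR) (simp add: WS_def map_sc pairw)
  finally show "\<exists>L. eqv st (pre \<alpha> (WChoice e r s f)) (pre \<alpha> (WS sy L)) \<and> meas L = deriv st (WChoice e r s f) \<alpha>"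
    using Le(2) Lf(2) by (intro exI[of _ "sc r Le @ sc s Lf"] conjI) auto
qed

end

context fixes st :: "'s::{semiring_0,monoid_mult} \<Rightarrow> 's" begin

lemma FT_seq: "FTP st e \<Longrightarrow> FTP st f \<Longrightarrow> FTP st (Seq e f)"
  unfolding FTP_def
proof
  fix \<alpha>
  assume IH: "\<forall>\<alpha>. \<exists>L. eqv st (pre \<alpha> e) (pre \<alpha> (WS sy L)) \<and> meas L = deriv st e \<alpha>"
    "\<forall>\<alpha>. \<exists>L. eqv st (pre \<alpha> f) (pre \<alpha> (WS sy L)) \<and> meas L = deriv st f \<alpha>"
  obtain Le where Le: "eqv st (pre \<alpha> e) (pre \<alpha> (WS sy Le))" "meas Le = deriv st e \<alpha>" using IH by blast
  obtain Lf where Lf: "eqv st (pre \<alpha> f) (pre \<alpha> (WS sy Lf))" "meas Lf = deriv st f \<alpha>" using IH by blast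
  define a where "a = meas Le Acc"
  define L' where "L' = filter (\<lambda>(r,d). d \<noteq> Acc) Le"
  have nA: "\<forall>(r,d)\<in>set L'. d \<noteq> Acc" unfolding L'_def by auto
  have "eqv st (pre \<alpha> (Seq e f)) (Seq (pre \<alpha> e) f)" by (rule es, rule eqv.S2)
  also have "eqv st \<dots> (Seq (pre \<alpha> (WS sy Le)) f)" by (rule seqL, rule Le(1))
  also have "eqv st \<dots> (pre \<alpha> (Seq (WS sy Le) f))" by (rule eqv.S2)
  also have "eqv st \<dots> (pre \<alpha> (Seq (WChoice (WS sy L') 1 1 (Seq (odot a) (Test BOne))) f))"
    unfolding a_def L'_def by (rule seqR, rule seqL, rule split_acc)
  also have "eqv st \<dots> (pre \<alpha> (WChoice (Seq (WS sy L') f) 1 1 (Seq (Seq (odot a) (Test BOne)) f)))"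
    by (rule seqR, rule eqv.S4)
  also have "eqv st \<dots> (pre \<alpha> (WChoice (WS sy (map (\<lambda>(r,d). (r, Tm f d)) L')) 1 1 (WS sy (sc a Lf))))"
  proof (rule alpha_wcong)
    show "eqv st (pre \<alpha> (Seq (WS sy L') f)) (pre \<alpha> (WS sy (map (\<lambda>(r,d). (r, Tm f d)) L')))"
      by (rule seqR, rule WS_seqT[OF nA])
    have "eqv st (pre \<alpha> (Seq (Seq (odot a) (Test BOne)) f)) (pre \<alpha> (Seq (odot a) f))"
      by (rule seqR) (meson eqv.S1a eqv.S2 eqv.trans seqR)
    also have "eqv st \<dots> (pre \<alpha> (WS sy (sc a Lf)))" by (rule alpha_odot[OF Lf(1)])
    finally show "eqv st (pre \<alpha> (Seq (Seq (odot a) (Test BOne)) f)) (pre \<alpha> (WS sy (sc a Lf)))" .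
  qed
  also have "eqv st \<dots> (pre \<alpha> (WS sy (map (\<lambda>(r,d). (r, Tm f d)) L' @ sc a Lf)))"
    by (rule seqR, rule es, rule WS_app_eq)
  finally have E: "eqv st (pre \<alpha> (Seq e f)) (pre \<alpha> (WS sy (map (\<lambda>(r,d). (r, Tm f d)) L' @ sc a Lf)))" .
  have M: "meas (map (\<lambda>(r,d). (r, Tm f d)) L' @ sc a Lf) = deriv st (Seq e f) \<alpha>"
  proof
    fix y
    show "meas (map (\<lambda>(r,d). (r, Tm f d)) L' @ sc a Lf) y = deriv st (Seq e f) \<alpha> y"
      unfolding meas_app measT meas_sc L'_def meas_filter a_def Lf(2)
      by (auto split: out.split exp.split simp: add.commute Le(2))
  qed
  show "\<exists>L. eqv st (pre \<alpha> (Seq e f)) (pre \<alpha> (WS sy L)) \<and> meas L = deriv st (Seq e f) \<alpha>"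
    using E M by blast
qed

lemma FT_loop: "FTP st e \<Longrightarrow> FTP st (Loop e b)"
  unfolding FTP_def
proof
  fix \<alpha>
  assume IH: "\<forall>\<alpha>. \<exists>L. eqv st (pre \<alpha> e) (pre \<alpha> (WS sy L)) \<and> meas L = deriv st e \<alpha>"
  obtain Le where Le: "eqv st (pre \<alpha> e) (pre \<alpha> (WS sy Le))" "meas Le = deriv st e \<alpha>" using IH by blast
  show "\<exists>L. eqv st (pre \<alpha> (Loop e b)) (pre \<alpha> (WS sy L)) \<and> meas L = deriv st (Loop e b) \<alpha>"
  proof (cases "beval \<alpha> b")
    case False
    have "eqv st (pre \<alpha> (Loop e b)) (pre \<alpha> (GChoice (Seq e (Loop e b)) b (Test BOne)))" by (rule seqR, rule eqv.L1)
    also have "eqv st \<dots> (pre \<alpha> (Test BOne))" by (rule pre_neg[OF False])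
    also have "eqv st \<dots> (pre \<alpha> (WS sy [(1,Acc)]))" by (rule seqR, rule es) (use sing_WS[of st Acc] in auto)
    finally show ?thesis using False by (intro exI[of _ "[(1,Acc)]"] conjI) auto
  next
    case True
    define a where "a = meas Le Acc"
    define L' where "L' = filter (\<lambda>(r,d). d \<noteq> Acc) Le"
    have nA: "\<forall>(r,d)\<in>set L'. d \<noteq> Acc" unfolding L'_def by auto
    let ?c = "atom_test \<alpha>"
    have "eqv st e (GChoice e ?c e)" by (rule es, rule eqv.G1)
    also have "eqv st \<dots> (GChoice (pre \<alpha> e) ?c e)" by (rule eqv.G2)
    also have "eqv st \<dots> (GChoice (pre \<alpha> (WS sy Le)) ?c e)" by (rule gcL, rule Le(1))
    also have "eqv st \<dots> (GChoice (WS sy Le) ?c e)" by (rule es, rule eqv.G2)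
    also have "eqv st \<dots> (GChoice (WChoice (WS sy L') 1 1 (Seq (odot a) (Test BOne))) ?c e)"
      unfolding a_def L'_def by (rule gcL, rule split_acc)
    also have "eqv st \<dots> (GChoice (WChoice (WS sy L') 1 a (Test BOne)) ?c e)" by (rule gcL, rule WT2)
    finally have ee: "eqv st e (GChoice (WChoice (WS sy L') 1 a (Test BOne)) ?c e)" .
    have "eqv st (pre \<alpha> (Loop e b)) (pre \<alpha> (GChoice (Seq (odot (st a * 1)) (Seq (WS sy L') (Loop e b))) b (Test BOne)))"
      by (rule eqv.L2[OF ee])
    also have "eqv st \<dots> (pre \<alpha> (Seq (odot (st a)) (Seq (WS sy L') (Loop e b))))"
      using pre_pos[OF True] by simp
    also have "eqv st \<dots> (pre \<alpha> (Seq (odot (st a)) (WS sy (map (\<lambda>(r,d). (r, Tm (Loop e b) d)) L'))))"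
      by (rule seqR, rule seqR, rule WS_seqT[OF nA])
    also have "eqv st \<dots> (pre \<alpha> (WS sy (sc (st a) (map (\<lambda>(r,d). (r, Tm (Loop e b) d)) L'))))"
      by (rule seqR, rule WS_scale)
    finally have E: "eqv st (pre \<alpha> (Loop e b)) (pre \<alpha> (WS sy (sc (st a) (map (\<lambda>(r,d). (r, Tm (Loop e b) d)) L'))))" .
    have M: "meas (sc (st a) (map (\<lambda>(r,d). (r, Tm (Loop e b) d)) L')) = deriv st (Loop e b) \<alpha>"
    proof
      fix y
      show "meas (sc (st a) (map (\<lambda>(r,d). (r, Tm (Loop e b) d)) L')) y = deriv st (Loop e b) \<alpha> y"
        unfolding meas_sc measT L'_def meas_filter a_def
        using True by (auto split: out.split exp.split simp: Le(2))
    qed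
    show ?thesis using E M by blast
  qed
qed

lemma FT: "FTP st e"
  by (induction e) (auto intro: FT_act FT_ret FT_test FT_g FT_w FT_seq FT_loop)

end

lemma eqv_equiv: "equiv UNIV (eqv_rel st)"
  unfolding equiv_def refl_on_def sym_def trans_def eqv_rel_def
  by (auto intro: eqv.refl eqv.sym eqv.trans)

lemma cls_eq: "cls st e = cls st f \<longleftrightarrow> eqv st e f"
  unfolding cls_def using equiv_class_eq_iff[OF eqv_equiv, of e f st] by (simp add: eqv_rel_def)

lemma cls_quot: "cls st e \<in> quot st"
  unfolding cls_def quot_def by (rule quotientI) simp

lemma gsum_pre: "\<alpha> \<in> set L \<Longrightarrow> eqv st (pre (\<alpha>::'t::finite set) (gsum L F)) (pre \<alpha> (F \<alpha>))"
proof (induction L)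
  case Nil then show ?case by simp
next
  case (Cons \<gamma> L)
  show ?case
  proof (cases "\<gamma> = \<alpha>")
    case True
    then show ?thesis by simp (rule pre_pos, simp add: atom_sem)
  next
    case False
    then have "eqv st (pre \<alpha> (gsum (\<gamma>#L) F)) (pre \<alpha> (gsum L F))"
      by simp (rule pre_neg, simp add: atom_sem)
    also have "eqv st \<dots> (pre \<alpha> (F \<alpha>))" using Cons False by simp
    finally show ?thesis .
  qed
qed

lemma gsum_deriv: "\<alpha> \<in> set L \<Longrightarrow> deriv st (gsum L F) (\<alpha>::'t::finite set) = deriv st (F \<alpha>) \<alpha>"
  by (induction L) (auto simp: atom_sem)

lemma wsum_deriv: "deriv st (wsum M) \<alpha> y = sum_list (map (\<lambda>(r,e). r * deriv st e \<alpha> y) M)"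
proof (induction M)
  case Nil then show ?case by (simp add: odot_def)
next
  case (Cons a M) then show ?case by (cases a) simp
qed

lemma sysh_deriv: "deriv st (sys_h h d) \<alpha> y = (if map_out id id (\<lambda>x'. Seq (Test BOne) (h x')) d = y then 1 else 0)"
  by (cases d) (auto split: out.split exp.split)

lemma meas_supp: "meas L d \<noteq> 0 \<Longrightarrow> d \<in> snd ` set L"
proof (induction L)
  case Nil then show ?case by simp
next
  case (Cons a L) then show ?case by (cases a) (auto split: if_splits)
qed

lemma meas_push: "finite D \<Longrightarrow> snd ` set L \<subseteq> D \<Longrightarrow>
   meas (map (\<lambda>(r,d). (r, \<kappa> d)) L) k = sum (meas L) {d\<in>D. \<kappa> d = k}"
proof (induction L)
  case Nil then show ?case by simp
next
  case (Cons a L)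
  obtain r d0 where a: "a = (r,d0)" by force
  have "sum (meas ((r,d0)#L)) {d\<in>D. \<kappa> d = k} = sum (\<lambda>d. if d0 = d then r else 0) {d\<in>D. \<kappa> d = k} + sum (meas L) {d\<in>D. \<kappa> d = k}"
    by (simp add: sum.distrib)
  also have "sum (\<lambda>d. if d0 = d then r else 0) {d\<in>D. \<kappa> d = k} = (if \<kappa> d0 = k then r else 0)"
    using Cons.prems a by (simp add: sum.delta)
  finally show ?case using Cons a by simp
qed

lemma meas_distinct: "distinct xs \<Longrightarrow> meas (map (\<lambda>d. (\<nu> d, d)) xs) y = (if y \<in> set xs then \<nu> y else 0)"
  by (induction xs) auto

lemma mass_sub: "finite D \<Longrightarrow> {a. \<nu> a \<noteq> 0} \<subseteq> D \<Longrightarrow> mass \<nu> A = sum \<nu> {a\<in>D. a \<in> A}"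
  unfolding mass_def by (rule sum.mono_neutral_left) auto

context fixes st :: "'s::{semiring_0,monoid_mult} \<Rightarrow> 's" begin

lemma WS_cong_map: "(\<forall>(r,d)\<in>set L. eqv st (s1 d) (s (\<kappa> d))) \<Longrightarrow>
   eqv st (WS s1 L) (WS s (map (\<lambda>(r,d). (r, \<kappa> d)) L))"
proof (induction L)
  case Nil then show ?case by (simp add: eqv.refl)
next
  case (Cons a L) then show ?case by (cases a) (auto intro: eqv.cong_wchoice)
qed

lemma canon2:
  assumes H11: "\<And>a b. \<kappa>1 a = \<kappa>1 b \<Longrightarrow> eqv st (s1 a) (s1 b)"
    and H22: "\<And>a b. \<kappa>2 a = \<kappa>2 b \<Longrightarrow> eqv st (s2 a) (s2 b)"
    and H12: "\<And>a b. \<kappa>1 a = \<kappa>2 b \<Longrightarrow> eqv st (s1 a) (s2 b)"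
    and M: "meas (map (\<lambda>(r,d). (r, \<kappa>1 d)) L1) = meas (map (\<lambda>(r,d). (r, \<kappa>2 d)) L2)"
  shows "eqv st (WS s1 L1) (WS s2 L2)"
proof -
  define s where "s k = (if \<exists>a. \<kappa>1 a = k then s1 (SOME a. \<kappa>1 a = k) else s2 (SOME b. \<kappa>2 b = k))" for k
  have 1: "eqv st (s1 d) (s (\<kappa>1 d))" for d
  proof -
    have "\<kappa>1 (SOME a. \<kappa>1 a = \<kappa>1 d) = \<kappa>1 d" by (rule someI) simp
    then have "eqv st (s1 (SOME a. \<kappa>1 a = \<kappa>1 d)) (s1 d)" by (rule H11)
    moreover have "s (\<kappa>1 d) = s1 (SOME a. \<kappa>1 a = \<kappa>1 d)" unfolding s_def by auto
    ultimately show ?thesis using eqv.sym by simp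
  qed
  have 2: "eqv st (s2 d) (s (\<kappa>2 d))" for d
  proof (cases "\<exists>a. \<kappa>1 a = \<kappa>2 d")
    case True
    then have k: "\<kappa>1 (SOME a. \<kappa>1 a = \<kappa>2 d) = \<kappa>2 d" by (rule someI_ex)
    have "s (\<kappa>2 d) = s1 (SOME a. \<kappa>1 a = \<kappa>2 d)" unfolding s_def using True by simp
    then show ?thesis using eqv.sym[OF H12[OF k]] by simp
  next
    case False
    have k: "\<kappa>2 (SOME b. \<kappa>2 b = \<kappa>2 d) = \<kappa>2 d" by (rule someI) simp
    have "s (\<kappa>2 d) = s2 (SOME b. \<kappa>2 b = \<kappa>2 d)" unfolding s_def using False by simp
    then show ?thesis using eqv.sym[OF H22[OF k]] by simp
  qed
  have "eqv st (WS s1 L1) (WS s (map (\<lambda>(r,d). (r, \<kappa>1 d)) L1))" by (rule WS_cong_map) (use 1 in auto)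
  also have "eqv st \<dots> (WS s (map (\<lambda>(r,d). (r, \<kappa>2 d)) L2))" by (rule canon[OF M])
  also have "eqv st \<dots> (WS s2 L2)" by (rule eqv.sym, rule WS_cong_map) (use 2 in auto)
  finally show ?thesis .
qed

end

lemma mass_push:
  assumes S: "finite S" and nu: "\<And>y. \<nu> y = sum g {d\<in>S. T d = y}"
  shows "mass \<nu> A = sum g {d\<in>S. T d \<in> A}"
proof -
  have supp: "{a. \<nu> a \<noteq> 0} \<subseteq> T ` S"
  proof
    fix a assume "a \<in> {a. \<nu> a \<noteq> 0}"
    have "{d\<in>S. T d = a} \<noteq> {}"
    proof
      assume "{d\<in>S. T d = a} = {}"
      then have "\<nu> a = 0" using nu[of a] by (metis sum.empty)
      then show False using \<open>a \<in> {a. \<nu> a \<noteq> 0}\<close> by simp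
    qed
    then show "a \<in> T ` S" by blast
  qed
  have "mass \<nu> A = sum \<nu> {a \<in> T`S. a \<in> A}" by (rule mass_sub[OF _ supp]) (use S in simp)
  also have "\<dots> = sum (\<lambda>y. sum g {d\<in>S. T d = y}) {a \<in> T`S. a \<in> A}" using nu by simp
  also have "\<dots> = sum (\<lambda>y. sum g {x. x \<in> {d\<in>S. T d\<in>A} \<and> T x = y}) (T ` {d\<in>S. T d\<in>A})"
  proof -
    have i: "T ` {d\<in>S. T d\<in>A} = {a \<in> T`S. a \<in> A}" by auto
    show ?thesis unfolding i
    proof (rule sum.cong[OF HOL.refl])
      fix y assume "y \<in> {a \<in> T`S. a \<in> A}"
      then have "{x. x \<in> {d\<in>S. T d\<in>A} \<and> T x = y} = {d\<in>S. T d = y}" by auto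
      then show "sum g {d\<in>S. T d = y} = sum g {x. x \<in> {d\<in>S. T d\<in>A} \<and> T x = y}" by simp
    qed
  qed
  also have "\<dots> = sum g {d\<in>S. T d \<in> A}" by (rule sum.image_gen[symmetric]) (use S in simp)
  finally show ?thesis .
qed

lemma mass_single: "mass \<nu> {a} = \<nu> a"
proof -
  have "{x\<in>{a}. \<nu> x \<noteq> 0} = (if \<nu> a = 0 then {} else {a})" by auto
  then show ?thesis unfolding mass_def by simp
qed

lemma mass_restrict: "(\<And>a. a \<in> A \<Longrightarrow> \<nu> a \<noteq> 0 \<Longrightarrow> a \<in> B) \<Longrightarrow> (\<And>a. a \<in> B \<Longrightarrow> \<nu> a \<noteq> 0 \<Longrightarrow> a \<in> A) \<Longrightarrow> mass \<nu> A = mass \<nu> B"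
  unfolding mass_def by (rule arg_cong[where f="sum \<nu>"]) auto

lemma pre_Acc: "{d. map_out id id f d = Acc} = {Acc}"
  by (rule set_eqI, case_tac x) auto


lemma sol_unfold: "sol_rhs \<beta> h x = gsum (enum_list UNIV) (\<lambda>\<alpha>. WS (sys_h h) (map (\<lambda>d. (\<beta> x \<alpha> d, d)) (enum_list {d. \<beta> x \<alpha> d \<noteq> 0})))"
  unfolding sol_rhs_def WS_def by (simp add: comp_def)

lemma sol_deriv:
  fixes \<alpha> :: "'t::finite set"
  assumes fin: "finite {d. \<beta> x \<alpha> d \<noteq> 0}"
  shows "deriv st (sol_rhs \<beta> h x) \<alpha> y = sum (\<beta> x \<alpha>) {d\<in>{d. \<beta> x \<alpha> d \<noteq> 0}. map_out id id (\<lambda>x'. Seq (Test BOne) (h x')) d = y}"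
proof -
  let ?S = "{d. \<beta> x \<alpha> d \<noteq> 0}"
  have e: "distinct (enum_list ?S)" "set (enum_list ?S) = ?S" using enum_list_prop[OF fin] by auto
  have a: "\<alpha> \<in> set (enum_list (UNIV :: 't set set))" using enum_list_prop[of "UNIV :: 't set set"] by simp
  have "deriv st (sol_rhs \<beta> h x) \<alpha> y = deriv st (wsum (map (\<lambda>d. (\<beta> x \<alpha> d, sys_h h d)) (enum_list ?S))) \<alpha> y"
    unfolding sol_rhs_def by (subst gsum_deriv[OF a]) (rule HOL.refl)
  also have "\<dots> = sum_list (map (\<lambda>d. \<beta> x \<alpha> d * (if map_out id id (\<lambda>x'. Seq (Test BOne) (h x')) d = y then 1 else 0)) (enum_list ?S))"
    unfolding wsum_deriv by (simp add: comp_def sysh_deriv)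
  also have "\<dots> = sum (\<lambda>d. \<beta> x \<alpha> d * (if map_out id id (\<lambda>x'. Seq (Test BOne) (h x')) d = y then 1 else 0)) ?S"
    using sum_list_distinct_conv_sum_set[OF e(1)] e(2) by simp
  also have "\<dots> = sum (\<beta> x \<alpha>) {d\<in>?S. map_out id id (\<lambda>x'. Seq (Test BOne) (h x')) d = y}"
    unfolding sum.inter_filter[OF fin] by (rule sum.cong[OF HOL.refl]) auto
  finally show ?thesis .
qed


lemma sum_self: "(\<And>d. T d = q' \<longleftrightarrow> d = q) \<Longrightarrow> sum \<nu> {d\<in>{d. \<nu> d \<noteq> 0}. T d = q'} = \<nu> q"
proof -
  assume h: "\<And>d. T d = q' \<longleftrightarrow> d = q"
  have "{d\<in>{d. \<nu> d \<noteq> 0}. T d = q'} = (if \<nu> q = 0 then {} else {q})" using h by auto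
  then show ?thesis by simp
qed

lemma dir1:
  fixes st :: "'s::{semiring_0,monoid_mult} \<Rightarrow> 's"
    and X :: "'x set"
    and \<beta> :: "'x \<Rightarrow> ('t::finite) set \<Rightarrow> ('v, 'p, 'x) out \<Rightarrow> 's"
    and dbar :: "('t, 'p, 'v, 's) exp set \<Rightarrow> 't set \<Rightarrow> ('v, 'p, ('t, 'p, 'v, 's) exp set) out \<Rightarrow> 's"
    and h :: "'x \<Rightarrow> ('t, 'p, 'v, 's) exp"
  assumes aut: "is_aut X \<beta>"
    and homU: "is_hom UNIV (deriv st) (quot st) dbar (cls st)"
    and sol: "is_solution st X \<beta> h"
  shows "is_hom X \<beta> (quot st) dbar (cls st \<circ> h)"
  unfolding is_hom_def
proof (intro conjI ballI allI)
  fix x assume "x \<in> X"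
  then show "(cls st \<circ> h) x \<in> quot st" by (simp add: cls_quot)
next
  fix x \<alpha> assume xX: "x \<in> X"
  let ?sol = "sol_rhs \<beta> h x"
  let ?S = "{d. \<beta> x \<alpha> d \<noteq> 0}"
  define T :: "('v,'p,'x) out \<Rightarrow> ('v,'p,('t,'p,'v,'s) exp) out" where "T = map_out id id (\<lambda>x'. Seq (Test BOne) (h x'))"
  have fin: "finite ?S" and into: "\<And>p x'. \<beta> x \<alpha> (Tr p x') \<noteq> 0 \<Longrightarrow> x' \<in> X"
    using aut xX unfolding is_aut_def by auto
  have c: "(cls st \<circ> h) x = cls st ?sol" using sol xX unfolding is_solution_def by (simp add: cls_eq)
  have nu: "deriv st ?sol \<alpha> y = sum (\<beta> x \<alpha>) {d\<in>?S. T d = y}" for y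
    unfolding T_def by (rule sol_deriv[where \<beta>=\<beta> and x=x and \<alpha>=\<alpha>, OF fin])
  have hU: "dbar (cls st ?sol) \<alpha> Acc = deriv st ?sol \<alpha> Acc"
       "dbar (cls st ?sol) \<alpha> Rej = deriv st ?sol \<alpha> Rej"
       "\<And>v. dbar (cls st ?sol) \<alpha> (OutV v) = deriv st ?sol \<alpha> (OutV v)"
       "\<And>p y. dbar (cls st ?sol) \<alpha> (Tr p y) = mass (deriv st ?sol \<alpha>) {Tr p x' | x'. x' \<in> UNIV \<and> cls st x' = y}"
    using homU unfolding is_hom_def by blast+
  show "dbar ((cls st \<circ> h) x) \<alpha> Acc = \<beta> x \<alpha> Acc"
    unfolding c hU nu by (rule sum_self) (simp add: T_def, case_tac d, auto)
  show "dbar ((cls st \<circ> h) x) \<alpha> Rej = \<beta> x \<alpha> Rej"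
    unfolding c hU nu by (rule sum_self) (simp add: T_def, case_tac d, auto)
  fix v
  show "dbar ((cls st \<circ> h) x) \<alpha> (OutV v) = \<beta> x \<alpha> (OutV v)"
    unfolding c hU nu by (intro sum_self) (simp add: T_def, case_tac d, auto)
next
  fix x \<alpha> p y assume xX: "x \<in> X"
  let ?sol = "sol_rhs \<beta> h x"
  let ?S = "{d. \<beta> x \<alpha> d \<noteq> 0}"
  define T :: "('v,'p,'x) out \<Rightarrow> ('v,'p,('t,'p,'v,'s) exp) out" where "T = map_out id id (\<lambda>x'. Seq (Test BOne) (h x'))"
  have fin: "finite ?S" and into: "\<And>p x'. \<beta> x \<alpha> (Tr p x') \<noteq> 0 \<Longrightarrow> x' \<in> X"
    using aut xX unfolding is_aut_def by auto
  have c: "(cls st \<circ> h) x = cls st ?sol" using sol xX unfolding is_solution_def by (simp add: cls_eq)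
  have nu: "deriv st ?sol \<alpha> y = sum (\<beta> x \<alpha>) {d\<in>?S. T d = y}" for y
    unfolding T_def by (rule sol_deriv[where \<beta>=\<beta> and x=x and \<alpha>=\<alpha>, OF fin])
  have hU: "\<And>p y. dbar (cls st ?sol) \<alpha> (Tr p y) = mass (deriv st ?sol \<alpha>) {Tr p x' | x'. x' \<in> UNIV \<and> cls st x' = y}"
    using homU unfolding is_hom_def by blast+
  show "dbar ((cls st \<circ> h) x) \<alpha> (Tr p y) = mass (\<beta> x \<alpha>) {Tr p x' |x'. x' \<in> X \<and> (cls st \<circ> h) x' = y}"
  proof -
    have "dbar ((cls st \<circ> h) x) \<alpha> (Tr p y) = mass (deriv st ?sol \<alpha>) {Tr p x' | x'. x' \<in> UNIV \<and> cls st x' = y}"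
      unfolding c hU ..
    also have "\<dots> = sum (\<beta> x \<alpha>) {d\<in>?S. T d \<in> {Tr p x' | x'. x' \<in> UNIV \<and> cls st x' = y}}"
      by (rule mass_push[OF fin nu])
    also have "{d\<in>?S. T d \<in> {Tr p x' | x'. x' \<in> UNIV \<and> cls st x' = y}} = {a \<in> {Tr p x' |x'. x' \<in> X \<and> (cls st \<circ> h) x' = y}. \<beta> x \<alpha> a \<noteq> 0}"
    proof -
      have cs: "cls st (Seq (Test BOne) e) = cls st e" for e by (simp add: cls_eq eqv.S1a)
      show ?thesis
        apply (rule set_eqI)
        subgoal for d by (cases d) (auto simp: T_def cs dest: into)
        done
    qed
    finally show "dbar ((cls st \<circ> h) x) \<alpha> (Tr p y) = mass (\<beta> x \<alpha>) {Tr p x' |x'. x' \<in> X \<and> (cls st \<circ> h) x' = y}"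
      unfolding mass_def .
  qed
qed


lemma pre_Rej: "{d. map_out id id f d = Rej} = {Rej}"
  by (rule set_eqI, case_tac x) auto

lemma pre_Out: "{d. map_out id id f d = OutV v} = {OutV v}"
  by (rule set_eqI, case_tac x) auto

lemma dir2:
  fixes st :: "'s::{semiring_0,monoid_mult} \<Rightarrow> 's"
    and X :: "'x set"
    and \<beta> :: "'x \<Rightarrow> ('t::finite) set \<Rightarrow> ('v, 'p, 'x) out \<Rightarrow> 's"
    and dbar :: "('t, 'p, 'v, 's) exp set \<Rightarrow> 't set \<Rightarrow> ('v, 'p, ('t, 'p, 'v, 's) exp set) out \<Rightarrow> 's"
    and h :: "'x \<Rightarrow> ('t, 'p, 'v, 's) exp"
  assumes aut: "is_aut X \<beta>"
    and homU: "is_hom UNIV (deriv st) (quot st) dbar (cls st)"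
    and hom: "is_hom X \<beta> (quot st) dbar (cls st \<circ> h)"
  shows "is_solution st X \<beta> h"
  unfolding is_solution_def
proof
  fix x assume xX: "x \<in> X"
  show "eqv st (h x) (sol_rhs \<beta> h x)"
  proof (rule atomwise)
    fix \<alpha> :: "'t set"
    let ?S = "{d. \<beta> x \<alpha> d \<noteq> 0}"
    let ?Lb = "map (\<lambda>d. (\<beta> x \<alpha> d, d)) (enum_list ?S)"
    define k1 :: "('v,'p,('t,'p,'v,'s) exp) out \<Rightarrow> ('v,'p,('t,'p,'v,'s) exp set) out" where "k1 = map_out id id (cls st)"
    define k2 :: "('v,'p,'x) out \<Rightarrow> ('v,'p,('t,'p,'v,'s) exp set) out" where "k2 = map_out id id (cls st \<circ> h)"
    have fin: "finite ?S" and into: "\<And>p x'. \<beta> x \<alpha> (Tr p x') \<noteq> 0 \<Longrightarrow> x' \<in> X"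
      using aut xX unfolding is_aut_def by auto
    have en: "distinct (enum_list ?S)" "set (enum_list ?S) = ?S" using enum_list_prop[OF fin] by auto
    have a: "\<alpha> \<in> set (enum_list (UNIV :: 't set set))" using enum_list_prop[of "UNIV :: 't set set"] by simp
    obtain L where L: "eqv st (pre \<alpha> (h x)) (pre \<alpha> (WS sy L))" "meas L = deriv st (h x) \<alpha>"
      using FT[of st "h x"] unfolding FTP_def by blast
    have measLb: "meas ?Lb = \<beta> x \<alpha>"
    proof
      fix y show "meas ?Lb y = \<beta> x \<alpha> y" unfolding meas_distinct[OF en(1)] en(2) by auto
    qed
    have m1: "meas (map (\<lambda>(r,d). (r, k1 d)) L) k = mass (deriv st (h x) \<alpha>) {d. k1 d = k}" for k
    proof -
      have supp: "{a. deriv st (h x) \<alpha> a \<noteq> 0} \<subseteq> snd ` set L"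
      proof
        fix a assume "a \<in> {a. deriv st (h x) \<alpha> a \<noteq> 0}"
        then have "meas L a \<noteq> 0" using L(2) by simp
        then show "a \<in> snd ` set L" by (rule meas_supp)
      qed
      have "meas (map (\<lambda>(r,d). (r, k1 d)) L) k = sum (meas L) {d\<in>snd ` set L. k1 d = k}"
        by (rule meas_push) auto
      also have "\<dots> = mass (deriv st (h x) \<alpha>) {d. k1 d = k}"
      proof -
        have "mass (deriv st (h x) \<alpha>) {d. k1 d = k} = sum (deriv st (h x) \<alpha>) {a \<in> snd ` set L. a \<in> {d. k1 d = k}}"
          by (rule mass_sub[OF _ supp]) simp
        then show ?thesis unfolding L(2) by simp
      qed
      finally show ?thesis .
    qed
    have m2: "meas (map (\<lambda>(r,d). (r, k2 d)) ?Lb) k = mass (\<beta> x \<alpha>) {d. k2 d = k}" for k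
    proof -
      have "meas (map (\<lambda>(r,d). (r, k2 d)) ?Lb) k = sum (meas ?Lb) {d\<in>?S. k2 d = k}"
      proof (rule meas_push[OF fin])
        show "snd ` set ?Lb \<subseteq> ?S"
        proof
          fix a assume "a \<in> snd ` set ?Lb"
          then have "a \<in> set (enum_list ?S)" by auto
          then show "a \<in> ?S" unfolding en(2) .
        qed
      qed
      also have "\<dots> = mass (\<beta> x \<alpha>) {d. k2 d = k}"
      proof -
        have "mass (\<beta> x \<alpha>) {d. k2 d = k} = sum (\<beta> x \<alpha>) {a \<in> ?S. a \<in> {d. k2 d = k}}"
          by (rule mass_sub[OF fin]) simp
        then show ?thesis unfolding measLb by simp
      qed
      finally show ?thesis .
    qed
    have hX: "dbar (cls st (h x)) \<alpha> Acc = \<beta> x \<alpha> Acc"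
       "dbar (cls st (h x)) \<alpha> Rej = \<beta> x \<alpha> Rej"
       "\<And>v. dbar (cls st (h x)) \<alpha> (OutV v) = \<beta> x \<alpha> (OutV v)"
       "\<And>p y. dbar (cls st (h x)) \<alpha> (Tr p y) = mass (\<beta> x \<alpha>) {Tr p x' | x'. x' \<in> X \<and> (cls st \<circ> h) x' = y}"
      using hom xX unfolding is_hom_def by auto
    have hU: "dbar (cls st (h x)) \<alpha> Acc = deriv st (h x) \<alpha> Acc"
       "dbar (cls st (h x)) \<alpha> Rej = deriv st (h x) \<alpha> Rej"
       "\<And>v. dbar (cls st (h x)) \<alpha> (OutV v) = deriv st (h x) \<alpha> (OutV v)"
       "\<And>p y. dbar (cls st (h x)) \<alpha> (Tr p y) = mass (deriv st (h x) \<alpha>) {Tr p x' | x'. x' \<in> UNIV \<and> cls st x' = y}"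
      using homU unfolding is_hom_def by blast+
    have M: "mass (deriv st (h x) \<alpha>) {d. k1 d = k} = mass (\<beta> x \<alpha>) {d. k2 d = k}" for k
    proof (cases k)
      case Acc
      have "{d. k1 d = k} = {Acc}" "{d. k2 d = k}= {Acc}" unfolding k1_def k2_def Acc by (rule pre_Acc)+
      then show ?thesis using hU(1) hX(1) by (simp add: mass_single)
    next
      case Rej
      have "{d. k1 d = k} = {Rej}" "{d. k2 d = k}= {Rej}" unfolding k1_def k2_def Rej by (rule pre_Rej)+
      then show ?thesis using hU(2) hX(2) by (simp add: mass_single)
    next
      case (OutV v)
      have "{d. k1 d = k} = {OutV v}" "{d. k2 d = k}= {OutV v}" unfolding k1_def k2_def OutV by (rule pre_Out)+
      then show ?thesis using hU(3) hX(3) by (simp add: mass_single)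
    next
      case (Tr p y)
      have s1: "{d. k1 d = k} = {Tr p x' | x'. x' \<in> UNIV \<and> cls st x' = y}" unfolding k1_def Tr
        by (rule set_eqI, case_tac x, auto)
      have "mass (\<beta> x \<alpha>) {d. k2 d = k} = mass (\<beta> x \<alpha>) {Tr p x' | x'. x' \<in> X \<and> (cls st \<circ> h) x' = y}"
        unfolding k2_def Tr
        apply (rule mass_restrict)
        subgoal for a by (cases a) (auto dest: into)
        subgoal for a by (cases a) auto
        done
      then show ?thesis unfolding s1 using hU(4) hX(4) by simp
    qed
    have W: "eqv st (WS sy L) (WS (sys_h h) ?Lb)"
    proof (rule canon2)
      show "\<And>a b. k1 a = k1 b \<Longrightarrow> eqv st (sy a) (sy b)"
        unfolding k1_def subgoal for a b by (cases a; cases b) (auto simp: cls_eq intro: eqv.refl seqR)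
        done
      show "\<And>a b. k2 a = k2 b \<Longrightarrow> eqv st (sys_h h a) (sys_h h b)"
        unfolding k2_def subgoal for a b by (cases a; cases b) (auto simp: cls_eq intro: eqv.refl seqR)
        done
      show "\<And>a b. k1 a = k2 b \<Longrightarrow> eqv st (sy a) (sys_h h b)"
        unfolding k1_def k2_def subgoal for a b by (cases a; cases b) (auto simp: cls_eq intro: eqv.refl seqR)
        done
      show "meas (map (\<lambda>(r,d). (r, k1 d)) L) = meas (map (\<lambda>(r,d). (r, k2 d)) ?Lb)"
        using m1 m2 M by auto
    qed
    have "eqv st (pre \<alpha> (h x)) (pre \<alpha> (WS sy L))" by (rule L(1))
    also have "eqv st \<dots> (pre \<alpha> (WS (sys_h h) ?Lb))" by (rule seqR, rule W)
    also have "eqv st \<dots> (pre \<alpha> (sol_rhs \<beta> h x))"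
      unfolding sol_unfold by (rule eqv.sym, rule gsum_pre[OF a])
    finally show "eqv st (pre \<alpha> (h x)) (pre \<alpha> (sol_rhs \<beta> h x))" .
  qed
qed

theorem mainTheorem9:
  fixes st :: "'s::{semiring_0,monoid_mult} \<Rightarrow> 's"
    and X :: "'x set"
    and \<beta> :: "'x \<Rightarrow> ('t::finite) set \<Rightarrow> ('v, 'p, 'x) out \<Rightarrow> 's"
    and dbar :: "('t, 'p, 'v, 's) exp set \<Rightarrow> 't set \<Rightarrow> ('v, 'p, ('t, 'p, 'v, 's) exp set) out \<Rightarrow> 's"
    and h :: "'x \<Rightarrow> ('t, 'p, 'v, 's) exp"
  assumes "positive_sr TYPE('s)"
    and "refinement_sr TYPE('s)"
    and "conway st"
    and "finite X"
    and "is_aut X \<beta>"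
    and "is_aut (quot st) dbar"
    and "is_hom UNIV (deriv st) (quot st) dbar (cls st)"
  shows "is_solution st X \<beta> h \<longleftrightarrow> is_hom X \<beta> (quot st) dbar (cls st \<circ> h)"
  using dir1[OF assms(5) assms(7)] dir2[OF assms(5) assms(7)] by blast


end
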